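(* Let $q\ge 2$ be an integer, $s\in(0,2)$, and let $P(x,t)=|\Psi(x,t)|^2$ be as in the context. Then for any $T>0$ the graph of $P$ over $[0,\pi]\times[0,T]$, i.e. the surface $\{(x,t,P(x,t))\}\subset\mathbb R^3$, has box-counting dimension $D_{xt}=2+s/2$.
   Context: For an integer $q\ge2$ and $s\in(0,2)$ define, for $x\in[0,\pi]$ and $t\in\mathbb R$, $$\Psi(x,t)=N\sum_{n=0}^{\infty} q^{n(s-2)}\sin(q^n x)\,e^{-i q^{2n} t},\qquad N=\sqrt{\tfrac{2}{\pi}\big(1-q^{2(s-2)}\big)}.$$ Let $P(x,t)=|\Psi(x,t)|^2$. For a bounded set $A\subset\mathbb R^3$ let $N(\delta)$ be the number of cubes $[m_1\delta,(m_1+1)\delta]\times[m_2\delta,(m_2+1)\delta]\times[m_3\delta,(m_3+1)\delta]$, $m_i\in\mathbb Z$, meeting $A$. The box-counting dimension is $\lim_{\delta\to0}\ln N(\delta)/\ln(1/\delta)$ when this limit exists. *)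

theory Defs
  imports "HOL-Analysis.Analysis"
begin

definition norm_const :: "nat \<Rightarrow> real \<Rightarrow> real" where
  "norm_const q s = sqrt ((2 / pi) * (1 - (real q) powr (2 * (s - 2))))"

definition Psi :: "nat \<Rightarrow> real \<Rightarrow> real \<Rightarrow> real \<Rightarrow> complex" where
  "Psi q s x t = complex_of_real (norm_const q s) *
     (\<Sum>n. complex_of_real ((real q) powr (real n * (s - 2)) * sin ((real q) ^ n * x))
            * exp (- \<i> * complex_of_real ((real q) ^ (2 * n) * t)))"

definition Prob :: "nat \<Rightarrow> real \<Rightarrow> real \<Rightarrow> real \<Rightarrow> real" where
  "Prob q s x t = (cmod (Psi q s x t))\<^sup>2"

definition box_count :: "(real \<times> real \<times> real) set \<Rightarrow> real \<Rightarrow> nat" where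
  "box_count A \<delta> = card {m :: int \<times> int \<times> int.
      \<exists>p \<in> A. of_int (fst m) * \<delta> \<le> fst p \<and> fst p \<le> (of_int (fst m) + 1) * \<delta>
        \<and> of_int (fst (snd m)) * \<delta> \<le> fst (snd p) \<and> fst (snd p) \<le> (of_int (fst (snd m)) + 1) * \<delta>
        \<and> of_int (snd (snd m)) * \<delta> \<le> snd (snd p) \<and> snd (snd p) \<le> (of_int (snd (snd m)) + 1) * \<delta>}"

definition has_box_dim :: "(real \<times> real \<times> real) set \<Rightarrow> real \<Rightarrow> bool" where
  "has_box_dim A d \<longleftrightarrow>
     ((\<lambda>\<delta>. ln (real (box_count A \<delta>)) / ln (1 / \<delta>)) \<longlongrightarrow> d) (at_right 0)"

end

theory Submission
  imports Defs "HOL-Real_Asymp.Real_Asymp"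
begin

lemma norm_expi_diff:
  "norm (exp (\<i> * of_real a) - exp (\<i> * of_real b)) \<le> \<bar>a - b\<bar>"
proof -
  have "exp (\<i> * of_real a) - exp (\<i> * of_real b) = exp (\<i> * of_real b) * (exp (\<i> * of_real (a - b)) - 1)"
    by (simp add: algebra_simps flip: exp_add)
  then have "norm (exp (\<i> * of_real a) - exp (\<i> * of_real b)) = norm (exp (\<i> * of_real (a - b)) - 1)"
    by (simp add: norm_mult)
  also have "\<dots> = 2 * \<bar>sin ((a - b) / 2)\<bar>" by (rule dist_exp_i_1)
  also have "\<dots> \<le> 2 * \<bar>(a - b) / 2\<bar>" using abs_sin_x_le_abs_x[of "(a-b)/2"] by linarith
  finally show ?thesis by simp
qed

lemma norm_expi_diff2:
  "norm (exp (\<i> * of_real a) - exp (\<i> * of_real b)) \<le> 2"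
proof -
  have "norm (exp (\<i> * of_real a) - exp (\<i> * of_real b)) \<le> norm (exp (\<i> * of_real a)) + norm (exp (\<i> * of_real b))"
    by (rule norm_triangle_ineq4)
  then show ?thesis by simp
qed

lemma abs_sin_diff: "\<bar>sin a - sin b\<bar> \<le> \<bar>a - b::real\<bar>"
proof -
  have "\<bar>sin a - sin b\<bar> = \<bar>Im (exp (\<i> * of_real a) - exp (\<i> * of_real b))\<bar>"
    by (simp add: Im_exp)
  also have "\<dots> \<le> norm (exp (\<i> * of_real a) - exp (\<i> * of_real b))" by (rule abs_Im_le_cmod)
  also have "\<dots> \<le> \<bar>a - b\<bar>" by (rule norm_expi_diff)
  finally show ?thesis .
qed

lemma sin_lower_cubic: assumes "0 \<le> x" shows "x - x^3/6 \<le> sin (x::real)"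
proof -
  have "\<bar>sin x - (\<Sum>m<3. sin_coeff m * x ^ m)\<bar> \<le> inverse (fact 3) * \<bar>x\<bar> ^ 3"
    by (rule Maclaurin_sin_bound)
  moreover have "(\<Sum>m<3. sin_coeff m * x ^ m) = x"
    by (simp add: sin_coeff_def eval_nat_numeral)
  moreover have "inverse (fact 3) = (1/6::real)" by (simp add: fact_numeral)
  ultimately have "\<bar>sin x - x\<bar> \<le> 1/6 * \<bar>x\<bar>^3" by simp
  then have "\<bar>sin x - x\<bar> \<le> x^3 / 6" using assms by simp
  then show ?thesis by linarith
qed

definition Dop :: "nat \<Rightarrow> real \<Rightarrow> (real \<Rightarrow> complex) \<Rightarrow> real \<Rightarrow> complex" where
  "Dop M h g t = (\<Sum>j\<le>M. (-1)^(M-j) * of_nat (M choose j) * g (t + real j * h))"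

lemma Dop_add: "Dop M h (\<lambda>u. f u + g u) t = Dop M h f t + Dop M h g t"
  by (simp add: Dop_def algebra_simps sum.distrib)

lemma Dop_diff: "Dop M h (\<lambda>u. f u - g u) t = Dop M h f t - Dop M h g t"
  by (simp add: Dop_def algebra_simps sum_subtractf)

lemma Dop_cmult: "Dop M h (\<lambda>u. c * f u) t = c * Dop M h f t"
  by (simp add: Dop_def sum_distrib_left algebra_simps)

lemma Dop_sum: "Dop M h (\<lambda>u. \<Sum>i\<in>I. f i u) t = (\<Sum>i\<in>I. Dop M h (f i) t)"
  unfolding Dop_def by (simp add: sum_distrib_left sum.swap[of _ I])

lemma Dop_cnj: "Dop M h (\<lambda>u. cnj (f u)) t = cnj (Dop M h f t)"
  by (simp add: Dop_def)

lemma Dop_expi: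
  "Dop M h (\<lambda>u. exp (\<i> * of_real (w * u))) t = (exp (\<i> * of_real (w * h)) - 1) ^ M * exp (\<i> * of_real (w * t))"
proof -
  let ?z = "exp (\<i> * of_real (w * h))"
  have e: "exp (\<i> * of_real (w * (t + real j * h))) = ?z ^ j * exp (\<i> * of_real (w * t))" for j
  proof -
    have "\<i> * of_real (w * (t + real j * h)) = of_nat j * (\<i> * of_real (w * h)) + \<i> * of_real (w * t)"
      by (simp add: algebra_simps)
    then show ?thesis by (simp add: exp_add exp_of_nat_mult)
  qed
  have "(?z - 1) ^ M = (?z + (-1)) ^ M" by simp
  also have "\<dots> = (\<Sum>j\<le>M. of_nat (M choose j) * ?z ^ j * (-1) ^ (M - j))"
    by (rule binomial_ring)
  finally have b: "(?z - 1) ^ M = (\<Sum>j\<le>M. of_nat (M choose j) * ?z ^ j * (-1) ^ (M - j))" .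
  show ?thesis unfolding Dop_def e b by (simp add: sum_distrib_left algebra_simps)
qed

lemma Dop_const:
  assumes "M \<ge> 1" shows "Dop M h (\<lambda>u. c) t = 0"
proof -
  have "Dop M h (\<lambda>u. c * exp (\<i> * of_real (0 * u))) t = c * ((exp (\<i> * of_real (0 * h)) - 1) ^ M * exp (\<i> * of_real (0 * t)))"
    by (simp only: Dop_cmult Dop_expi)
  then show ?thesis using assms by (simp add: power_0_left)
qed

lemma periodic_nat:
  assumes "\<And>u. g (u + h) = g u" shows "g (t + real j * h) = g t"
proof (induction j)
  case 0 then show ?case by simp
next
  case (Suc j)
  have "g (t + real (Suc j) * h) = g ((t + real j * h) + h)" by (simp add: algebra_simps)
  also have "\<dots> = g (t + real j * h)" by (rule assms)
  finally show ?case using Suc by simp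
qed

lemma Dop_periodic_mult:
  assumes "\<And>u. g (u + h) = g u"
  shows "Dop M h (\<lambda>u. g u * f u) t = g t * Dop M h f t"
  unfolding Dop_def using periodic_nat[of g h, OF assms]
  by (simp add: sum_distrib_left algebra_simps)

lemma Dop_periodic:
  assumes "\<And>u. g (u + h) = g u" "M \<ge> 1"
  shows "Dop M h g t = 0"
proof -
  have "Dop M h (\<lambda>u. g u * 1) t = g t * Dop M h (\<lambda>u. 1) t"
    by (rule Dop_periodic_mult[of g h M "\<lambda>u. 1" t, OF assms(1)])
  then show ?thesis using Dop_const[OF assms(2)] by simp
qed

lemma Dop_close:
  assumes "\<And>j. j \<le> M \<Longrightarrow> norm (f (t + real j * h) - g (t + real j * h)) \<le> E"
  shows "norm (Dop M h f t - Dop M h g t) \<le> 2 ^ M * E"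
proof -
  have "norm (Dop M h f t - Dop M h g t) = norm (\<Sum>j\<le>M. (-1)^(M-j) * of_nat (M choose j) * (f (t + real j * h) - g (t + real j * h)))"
    unfolding Dop_def by (simp add: algebra_simps sum_subtractf)
  also have "\<dots> \<le> (\<Sum>j\<le>M. norm ((-1)^(M-j) * of_nat (M choose j) * (f (t + real j * h) - g (t + real j * h)) :: complex))"
    by (rule norm_sum)
  also have "\<dots> \<le> (\<Sum>j\<le>M. real (M choose j) * E)"
  proof (rule sum_mono)
    fix j assume "j \<in> {..M}"
    then have "norm (f (t + real j * h) - g (t + real j * h)) \<le> E" using assms by simp
    then show "norm ((-1)^(M-j) * of_nat (M choose j) * (f (t + real j * h) - g (t + real j * h)) :: complex) \<le> real (M choose j) * E"
      by (simp add: norm_mult norm_power mult_left_mono)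
  qed
  also have "\<dots> = 2 ^ M * E" by (simp add: sum_distrib_right[symmetric] choose_row_sum flip: of_nat_sum)
  finally show ?thesis .
qed

lemma Dop_bound:
  assumes "M \<ge> 1" "\<And>j. j \<le> M \<Longrightarrow> norm (f (t + real j * h) - f t) \<le> E"
  shows "norm (Dop M h f t) \<le> 2 ^ M * E"
proof -
  have "norm (Dop M h f t - Dop M h (\<lambda>u. f t) t) \<le> 2 ^ M * E"
    by (rule Dop_close) (use assms in auto)
  then show ?thesis using Dop_const[OF assms(1)] by simp
qed

lemma Dop_big_step:
  assumes "M \<ge> 1" "norm (Dop M h f t) \<ge> 2 ^ M * E"
  shows "\<exists>j\<le>M. norm (f (t + real j * h) - f t) \<ge> E"
proof (rule ccontr)
  assume "\<not> ?thesis"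
  then have *: "\<And>j. j \<le> M \<Longrightarrow> norm (f (t + real j * h) - f t) < E" by (meson not_le)
  have "norm (f (t + real 0 * h) - f t) < E" using * by blast
  then have E: "E > 0" by simp
  have "\<exists>E'. E' < E \<and> (\<forall>j\<le>M. norm (f (t + real j * h) - f t) \<le> E')"
  proof
    let ?E' = "Max ((\<lambda>j. norm (f (t + real j * h) - f t)) ` {..M})"
    have "?E' < E" by (subst Max_less_iff) (auto intro: *)
    moreover have "\<forall>j\<le>M. norm (f (t + real j * h) - f t) \<le> ?E'" by (auto intro: Max_ge)
    ultimately show "?E' < E \<and> (\<forall>j\<le>M. norm (f (t + real j * h) - f t) \<le> ?E')" by blast
  qed
  then obtain E' where "E' < E" "\<And>j. j \<le> M \<Longrightarrow> norm (f (t + real j * h) - f t) \<le> E'" by blast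
  then have "norm (Dop M h f t) \<le> 2 ^ M * E'" using Dop_bound[OF assms(1)] by blast
  moreover have "2 ^ M * E' < 2 ^ M * E" using \<open>E' < E\<close> by simp
  ultimately show False using assms(2) by linarith
qed

lemma Dop_mult_expi:
  assumes "\<And>j. j \<le> M \<Longrightarrow> norm (f (t + real j * h) - f t) \<le> E"
  shows "norm (Dop M h (\<lambda>u. f u * exp (\<i> * of_real (w * u))) t
     - exp (\<i> * of_real (w * t)) * (exp (\<i> * of_real (w * h)) - 1) ^ M * f t) \<le> 2 ^ M * E"
proof -
  have "Dop M h (\<lambda>u. f t * exp (\<i> * of_real (w * u))) t = exp (\<i> * of_real (w * t)) * (exp (\<i> * of_real (w * h)) - 1) ^ M * f t"
    by (simp only: Dop_cmult Dop_expi) (simp add: algebra_simps)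
  moreover have "norm (Dop M h (\<lambda>u. f u * exp (\<i> * of_real (w * u))) t - Dop M h (\<lambda>u. f t * exp (\<i> * of_real (w * u))) t) \<le> 2 ^ M * E"
  proof (rule Dop_close)
    fix j assume "j \<le> M"
    have "norm (f (t + real j * h) * exp (\<i> * of_real (w * (t + real j * h))) - f t * exp (\<i> * of_real (w * (t + real j * h))))
        = norm (f (t + real j * h) - f t)" by (simp add: norm_mult flip: left_diff_distrib)
    then show "norm (f (t + real j * h) * exp (\<i> * of_real (w * (t + real j * h))) - f t * exp (\<i> * of_real (w * (t + real j * h)))) \<le> E"
      using assms \<open>j \<le> M\<close> by simp
  qed
  ultimately show ?thesis by simp
qed

definition cubeset :: "(real \<times> real \<times> real) set \<Rightarrow> real \<Rightarrow> (int \<times> int \<times> int) set" where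
  "cubeset A \<delta> = {m :: int \<times> int \<times> int.
      \<exists>p \<in> A. of_int (fst m) * \<delta> \<le> fst p \<and> fst p \<le> (of_int (fst m) + 1) * \<delta>
        \<and> of_int (fst (snd m)) * \<delta> \<le> fst (snd p) \<and> fst (snd p) \<le> (of_int (fst (snd m)) + 1) * \<delta>
        \<and> of_int (snd (snd m)) * \<delta> \<le> snd (snd p) \<and> snd (snd p) \<le> (of_int (snd (snd m)) + 1) * \<delta>}"

lemma box_count_cubeset: "box_count A \<delta> = card (cubeset A \<delta>)"
  unfolding box_count_def cubeset_def ..

lemma int_le_from_mult:
  fixes m :: int and y \<delta> :: real
  assumes "\<delta> > 0" "of_int m * \<delta> \<le> y * \<delta>" shows "of_int m \<le> y"
  using assms by simp

lemma card_int_interval_real: "real (card {a..b::int}) \<ge> of_int b - of_int a + 1"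
  by simp

lemma card_int_interval_real_le: "a \<le> b + 1 \<Longrightarrow> real (card {a..b::int}) = of_int b - of_int a + 1"
  by simp

lemma box_upper:
  fixes f :: "real \<Rightarrow> real \<Rightarrow> real" and a b \<delta> \<Omega> :: real
  defines "G \<equiv> {(x, t, f x t) | x t. x \<in> {0..a} \<and> t \<in> {0..b}}"
  assumes \<delta>: "\<delta> > 0" and ab: "a \<ge> 0" "b \<ge> 0" and \<Omega>: "\<Omega> \<ge> 0"
    and osc: "\<And>x t x' t'. x \<in> {0..a} \<Longrightarrow> t \<in> {0..b} \<Longrightarrow> x' \<in> {0..a} \<Longrightarrow> t' \<in> {0..b}
       \<Longrightarrow> \<bar>x - x'\<bar> \<le> \<delta> \<Longrightarrow> \<bar>t - t'\<bar> \<le> \<delta> \<Longrightarrow> \<bar>f x t - f x' t'\<bar> \<le> \<Omega>"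
  shows "finite (cubeset G \<delta>) \<and> real (box_count G \<delta>) \<le> (a/\<delta> + 2) * (b/\<delta> + 2) * (2*\<Omega>/\<delta> + 5)"
proof -
  define I1 where "I1 = {-1..\<lfloor>a/\<delta>\<rfloor>}"
  define I2 where "I2 = {-1..\<lfloor>b/\<delta>\<rfloor>}"
  define M3 where "M3 m1 m2 = {m3::int. \<exists>x t. x \<in> {0..a} \<and> t \<in> {0..b} \<and>
       of_int m1 * \<delta> \<le> x \<and> x \<le> (of_int m1 + 1) * \<delta> \<and> of_int m2 * \<delta> \<le> t \<and> t \<le> (of_int m2 + 1) * \<delta>
       \<and> of_int m3 * \<delta> \<le> f x t \<and> f x t \<le> (of_int m3 + 1) * \<delta>}" for m1 m2
  define e where "e = \<lceil>\<Omega>/\<delta>\<rceil>"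
  have e0: "e \<ge> 0"
  proof -
    have "\<Omega>/\<delta> \<ge> 0" using \<Omega> \<delta> by simp
    then show ?thesis unfolding e_def by linarith
  qed
  have M3sub: "\<exists>c. M3 m1 m2 \<subseteq> {c - e - 1 .. c + e + 1}" for m1 m2
  proof (cases "M3 m1 m2 = {}")
    case True then show ?thesis by blast
  next
    case False
    then obtain c where "c \<in> M3 m1 m2" by blast
    then obtain x0 t0 where p0: "x0 \<in> {0..a}" "t0 \<in> {0..b}"
       "of_int m1 * \<delta> \<le> x0" "x0 \<le> (of_int m1 + 1) * \<delta>" "of_int m2 * \<delta> \<le> t0" "t0 \<le> (of_int m2 + 1) * \<delta>"
       "of_int c * \<delta> \<le> f x0 t0" "f x0 t0 \<le> (of_int c + 1) * \<delta>"
      unfolding M3_def by blast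
    show ?thesis
    proof (rule exI[of _ c], rule subsetI)
      fix m3 assume "m3 \<in> M3 m1 m2"
      then obtain x t where p: "x \<in> {0..a}" "t \<in> {0..b}"
       "of_int m1 * \<delta> \<le> x" "x \<le> (of_int m1 + 1) * \<delta>" "of_int m2 * \<delta> \<le> t" "t \<le> (of_int m2 + 1) * \<delta>"
       "of_int m3 * \<delta> \<le> f x t" "f x t \<le> (of_int m3 + 1) * \<delta>"
        unfolding M3_def by blast
      have "\<bar>x - x0\<bar> \<le> \<delta>" "\<bar>t - t0\<bar> \<le> \<delta>" using p p0 by (auto simp: algebra_simps)
      then have d: "\<bar>f x t - f x0 t0\<bar> \<le> \<Omega>" using osc p p0 by blast
      have "of_int m3 * \<delta> \<le> (of_int c + 1 + \<Omega>/\<delta>) * \<delta>"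
        using d p p0 \<delta> by (simp add: algebra_simps)
      then have "of_int m3 \<le> of_int c + 1 + \<Omega>/\<delta>" using \<delta> by simp
      also have "\<dots> \<le> of_int c + 1 + of_int e" unfolding e_def by simp
      finally have u: "m3 \<le> c + e + 1" by linarith
      have "(of_int c - \<Omega>/\<delta>) * \<delta> \<le> (of_int m3 + 1) * \<delta>"
        using d p p0 \<delta> by (simp add: algebra_simps)
      then have "of_int c - \<Omega>/\<delta> \<le> of_int m3 + 1" using \<delta> by simp
      moreover have "\<Omega>/\<delta> \<le> of_int e" unfolding e_def by simp
      ultimately have l: "c - e - 1 \<le> m3" by linarith
      show "m3 \<in> {c - e - 1 .. c + e + 1}" using u l by simp
    qed
  qed
  have finM3: "finite (M3 m1 m2)" for m1 m2
    using M3sub[of m1 m2] finite_subset by blast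
  have cardM3: "real (card (M3 m1 m2)) \<le> 2*\<Omega>/\<delta> + 5" for m1 m2
  proof -
    obtain c where c: "M3 m1 m2 \<subseteq> {c - e - 1 .. c + e + 1}" using M3sub by blast
    have "card (M3 m1 m2) \<le> card {c - e - 1 .. c + e + 1}" by (rule card_mono) (use c in auto)
    then have "real (card (M3 m1 m2)) \<le> real (card {c - e - 1 .. c + e + 1})" by simp
    also have "\<dots> = 2 * of_int e + 3" using e0 by simp
    also have "\<dots> \<le> 2*\<Omega>/\<delta> + 5"
    proof -
      have "of_int e < \<Omega>/\<delta> + 1" unfolding e_def by linarith
      then show ?thesis by simp
    qed
    finally show ?thesis .
  qed
  have sub: "cubeset G \<delta> \<subseteq> (SIGMA m1:I1. SIGMA m2:I2. M3 m1 m2)"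
  proof
    fix m assume "m \<in> cubeset G \<delta>"
    then obtain m1 m2 m3 where m: "m = (m1, m2, m3)" by (cases m) auto
    from \<open>m \<in> cubeset G \<delta>\<close> obtain x t where p: "x \<in> {0..a}" "t \<in> {0..b}"
       "of_int m1 * \<delta> \<le> x" "x \<le> (of_int m1 + 1) * \<delta>" "of_int m2 * \<delta> \<le> t" "t \<le> (of_int m2 + 1) * \<delta>"
       "of_int m3 * \<delta> \<le> f x t" "f x t \<le> (of_int m3 + 1) * \<delta>"
      unfolding cubeset_def G_def m by auto
    have "m3 \<in> M3 m1 m2" unfolding M3_def using p by blast
    moreover have "m1 \<in> I1"
    proof -
      have "of_int m1 * \<delta> \<le> (a/\<delta>) * \<delta>" using p \<delta> by simp
      then have "of_int m1 \<le> a/\<delta>" using \<delta> by (simp add: pos_le_divide_eq)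
      then have "m1 \<le> \<lfloor>a/\<delta>\<rfloor>" by linarith
      moreover have "(of_int m1 + 1) * \<delta> \<ge> 0" using p(1,4) by simp
      then have "of_int m1 + 1 \<ge> (0::real)" using \<delta> by (simp add: zero_le_mult_iff)
      ultimately show ?thesis unfolding I1_def by simp
    qed
    moreover have "m2 \<in> I2"
    proof -
      have "of_int m2 * \<delta> \<le> (b/\<delta>) * \<delta>" using p \<delta> by simp
      then have "of_int m2 \<le> b/\<delta>" using \<delta> by (simp add: pos_le_divide_eq)
      then have "m2 \<le> \<lfloor>b/\<delta>\<rfloor>" by linarith
      moreover have "(of_int m2 + 1) * \<delta> \<ge> 0" using p(2,6) by simp
      then have "of_int m2 + 1 \<ge> (0::real)" using \<delta> by (simp add: zero_le_mult_iff)
      ultimately show ?thesis unfolding I2_def by simp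
    qed
    ultimately show "m \<in> (SIGMA m1:I1. SIGMA m2:I2. M3 m1 m2)" unfolding m by simp
  qed
  have finS: "finite (SIGMA m1:I1. SIGMA m2:I2. M3 m1 m2)"
    unfolding I1_def I2_def using finM3 by (intro finite_SigmaI) auto
  have fin: "finite (cubeset G \<delta>)" using sub finS finite_subset by blast
  have "card (cubeset G \<delta>) \<le> card (SIGMA m1:I1. SIGMA m2:I2. M3 m1 m2)"
    by (rule card_mono[OF finS sub])
  also have "\<dots> = (\<Sum>m1\<in>I1. \<Sum>m2\<in>I2. card (M3 m1 m2))"
    unfolding I1_def I2_def using finM3 by (simp add: card_SigmaI)
  finally have "real (card (cubeset G \<delta>)) \<le> (\<Sum>m1\<in>I1. \<Sum>m2\<in>I2. real (card (M3 m1 m2)))"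
    by (simp flip: of_nat_sum)
  also have "\<dots> \<le> (\<Sum>m1\<in>I1. \<Sum>m2\<in>I2. 2*\<Omega>/\<delta> + 5)"
    by (intro sum_mono cardM3)
  also have "\<dots> = real (card I1) * real (card I2) * (2*\<Omega>/\<delta> + 5)" by simp
  also have "\<dots> \<le> (a/\<delta> + 2) * (b/\<delta> + 2) * (2*\<Omega>/\<delta> + 5)"
  proof -
    have c1: "real (card I1) \<le> a/\<delta> + 2"
    proof -
      have "0 \<le> \<lfloor>a/\<delta>\<rfloor>" using ab \<delta> by simp
      then have "real (card I1) = of_int \<lfloor>a/\<delta>\<rfloor> + 2" unfolding I1_def by simp
      then show ?thesis by linarith
    qed
    have c2: "real (card I2) \<le> b/\<delta> + 2"
    proof -
      have "0 \<le> \<lfloor>b/\<delta>\<rfloor>" using ab \<delta> by simp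
      then have "real (card I2) = of_int \<lfloor>b/\<delta>\<rfloor> + 2" unfolding I2_def by simp
      then show ?thesis by linarith
    qed
    have "0 \<le> 2*\<Omega>/\<delta> + 5" using \<Omega> \<delta> by simp
    then show ?thesis using c1 c2 by (intro mult_mono) auto
  qed
  finally show ?thesis using fin by (simp add: box_count_cubeset)
qed

lemma ivt_between:
  fixes g :: "real \<Rightarrow> real"
  assumes "continuous_on {min u v..max u v} g" "min (g u) (g v) \<le> y" "y \<le> max (g u) (g v)"
  shows "\<exists>\<tau>. min u v \<le> \<tau> \<and> \<tau> \<le> max u v \<and> g \<tau> = y"
proof (cases "u \<le> v")
  case True
  then have c: "continuous_on {u..v} g" using assms(1) by (simp add: min_def max_def)
  show ?thesis
  proof (cases "g u \<le> g v")
    case True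
    then show ?thesis using IVT'[of g u y v, OF _ _ \<open>u \<le> v\<close> c] assms \<open>u \<le> v\<close> by (auto simp: min_def max_def split: if_splits)
  next
    case False
    then show ?thesis using IVT2'[of g v y u, OF _ _ \<open>u \<le> v\<close> c] assms \<open>u \<le> v\<close> by (auto simp: min_def max_def split: if_splits)
  qed
next
  case False
  then have vu: "v \<le> u" by simp
  have mm: "min u v = v" "max u v = u" using vu by auto
  have c: "continuous_on {v..u} g" using assms(1) unfolding mm .
  show ?thesis
  proof (cases "g v \<le> g u")
    case True
    then show ?thesis using IVT'[of g v y u, OF _ _ vu c] assms vu by (auto simp: min_def max_def split: if_splits)
  next
    case False
    then show ?thesis using IVT2'[of g u y v, OF _ _ vu c] assms vu by (auto simp: min_def max_def split: if_splits)
  qed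
qed

lemma box_lower:
  fixes f :: "real \<Rightarrow> real \<Rightarrow> real" and a b \<delta> \<Omega> :: real
    and X :: "real set" and B :: "'b set" and lo hi :: "'b \<Rightarrow> real" and t1 t2 :: "real \<Rightarrow> 'b \<Rightarrow> real"
  defines "G \<equiv> {(x, t, f x t) | x t. x \<in> {0..a} \<and> t \<in> {0..b}}"
  assumes \<delta>: "\<delta> > 0" and finX: "finite X" and finB: "finite B"
    and X: "X \<subseteq> {0..a}" and blk: "\<And>\<beta>. \<beta> \<in> B \<Longrightarrow> 0 \<le> lo \<beta> \<and> hi \<beta> \<le> b"
    and inj: "inj_on (\<lambda>x. \<lfloor>x/\<delta>\<rfloor>) X"
    and sep: "\<And>\<beta> \<beta>' t t'. \<beta> \<in> B \<Longrightarrow> \<beta>' \<in> B \<Longrightarrow> \<beta> \<noteq> \<beta>' \<Longrightarrow> t \<in> {lo \<beta>..hi \<beta>} \<Longrightarrow> t' \<in> {lo \<beta>'..hi \<beta>'} \<Longrightarrow> \<bar>t - t'\<bar> > \<delta>"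
    and cont: "\<And>x. x \<in> X \<Longrightarrow> continuous_on {0..b} (f x)"
    and pts: "\<And>x \<beta>. x \<in> X \<Longrightarrow> \<beta> \<in> B \<Longrightarrow> t1 x \<beta> \<in> {lo \<beta>..hi \<beta>} \<and> t2 x \<beta> \<in> {lo \<beta>..hi \<beta>}
          \<and> \<bar>f x (t1 x \<beta>) - f x (t2 x \<beta>)\<bar> \<ge> \<Omega>"
    and fin: "finite (cubeset G \<delta>)"
  shows "real (card X) * real (card B) * (\<Omega>/\<delta> - 1) \<le> real (box_count G \<delta>)"
proof -
  define Z where "Z xb = {l::int. min (f (fst xb) (t1 (fst xb) (snd xb))) (f (fst xb) (t2 (fst xb) (snd xb))) \<le> of_int l * \<delta>
        \<and> of_int l * \<delta> \<le> max (f (fst xb) (t1 (fst xb) (snd xb))) (f (fst xb) (t2 (fst xb) (snd xb)))}" for xb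
  define S where "S = (SIGMA xb:X \<times> B. Z xb)"
  have ex_tau: "\<exists>\<tau>. \<tau> \<in> {lo (snd xb)..hi (snd xb)} \<and> f (fst xb) \<tau> = of_int l * \<delta>" if "(xb, l) \<in> S" for xb l
  proof -
    obtain x \<beta> where xb: "xb = (x, \<beta>)" by (cases xb)
    have x: "x \<in> X" and \<beta>: "\<beta> \<in> B" and l: "l \<in> Z (x, \<beta>)" using that unfolding S_def xb by auto
    let ?u = "t1 x \<beta>" and ?v = "t2 x \<beta>"
    have uv: "?u \<in> {lo \<beta>..hi \<beta>}" "?v \<in> {lo \<beta>..hi \<beta>}" using pts[OF x \<beta>] by auto
    have sub: "{min ?u ?v..max ?u ?v} \<subseteq> {0..b}" using uv blk[OF \<beta>] by auto
    have "continuous_on {min ?u ?v..max ?u ?v} (f x)" using continuous_on_subset[OF cont[OF x] sub] .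
    moreover have "min (f x ?u) (f x ?v) \<le> of_int l * \<delta>" "of_int l * \<delta> \<le> max (f x ?u) (f x ?v)"
      using l unfolding Z_def by auto
    ultimately obtain \<tau> where "min ?u ?v \<le> \<tau>" "\<tau> \<le> max ?u ?v" "f x \<tau> = of_int l * \<delta>"
      using ivt_between[of ?u ?v "f x" "of_int l * \<delta>"] by blast
    then show ?thesis using uv unfolding xb by (intro exI[of _ \<tau>]) auto
  qed
  define tau where "tau xb l = (SOME \<tau>. \<tau> \<in> {lo (snd xb)..hi (snd xb)} \<and> f (fst xb) \<tau> = of_int l * \<delta>)" for xb l
  have tau: "tau xb l \<in> {lo (snd xb)..hi (snd xb)} \<and> f (fst xb) (tau xb l) = of_int l * \<delta>" if "(xb, l) \<in> S" for xb l
    unfolding tau_def using someI_ex[OF ex_tau[OF that]] .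
  define \<Phi> where "\<Phi> p = (\<lfloor>fst (fst p) / \<delta>\<rfloor>, \<lfloor>tau (fst p) (snd p) / \<delta>\<rfloor>, snd p)" for p
  have fl: "of_int \<lfloor>y/\<delta>\<rfloor> * \<delta> \<le> y \<and> y \<le> (of_int \<lfloor>y/\<delta>\<rfloor> + 1) * \<delta>" for y
  proof -
    have A: "of_int \<lfloor>y/\<delta>\<rfloor> \<le> y/\<delta>" and B: "y/\<delta> \<le> of_int \<lfloor>y/\<delta>\<rfloor> + 1" by linarith+
    have "of_int \<lfloor>y/\<delta>\<rfloor> * \<delta> \<le> y" using A pos_le_divide_eq[OF \<delta>] by blast
    moreover have "y \<le> (of_int \<lfloor>y/\<delta>\<rfloor> + 1) * \<delta>" using B pos_divide_le_eq[OF \<delta>] by blast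
    ultimately show ?thesis by blast
  qed
  have map: "\<Phi> ` S \<subseteq> cubeset G \<delta>"
  proof
    fix m assume "m \<in> \<Phi> ` S"
    then obtain x \<beta> l where p: "((x, \<beta>), l) \<in> S" and m: "m = \<Phi> ((x, \<beta>), l)" by auto
    have x: "x \<in> X" and \<beta>: "\<beta> \<in> B" using p unfolding S_def by auto
    let ?\<tau> = "tau (x, \<beta>) l"
    have t: "?\<tau> \<in> {lo \<beta>..hi \<beta>}" "f x ?\<tau> = of_int l * \<delta>" using tau[OF p] by auto
    have inG: "(x, ?\<tau>, f x ?\<tau>) \<in> G" unfolding G_def using X x t(1) blk[OF \<beta>] by auto
    show "m \<in> cubeset G \<delta>" unfolding cubeset_def m \<Phi>_def
      using fl[of x] fl[of ?\<tau>] t(2) \<delta> by (auto intro!: bexI[OF _ inG])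
  qed
  have injP: "inj_on \<Phi> S"
  proof (rule inj_onI)
    fix p p' assume p: "p \<in> S" and p': "p' \<in> S" and eq: "\<Phi> p = \<Phi> p'"
    obtain x \<beta> l where pp: "p = ((x, \<beta>), l)" by (metis prod.collapse)
    obtain x' \<beta>' l' where pp': "p' = ((x', \<beta>'), l')" by (metis prod.collapse)
    have x: "x \<in> X" "\<beta> \<in> B" "x' \<in> X" "\<beta>' \<in> B" using p p' unfolding pp pp' S_def by auto
    have e1: "\<lfloor>x/\<delta>\<rfloor> = \<lfloor>x'/\<delta>\<rfloor>" and e2: "\<lfloor>tau (x, \<beta>) l / \<delta>\<rfloor> = \<lfloor>tau (x', \<beta>') l' / \<delta>\<rfloor>" and e3: "l = l'"
      using eq unfolding pp pp' \<Phi>_def by auto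
    have "x = x'" using inj e1 x unfolding inj_on_def by blast
    moreover have "\<beta> = \<beta>'"
    proof (rule ccontr)
      assume ne: "\<beta> \<noteq> \<beta>'"
      have t: "tau (x, \<beta>) l \<in> {lo \<beta>..hi \<beta>}" using tau[OF p[unfolded pp]] by simp
      have t': "tau (x', \<beta>') l' \<in> {lo \<beta>'..hi \<beta>'}" using tau[OF p'[unfolded pp']] by simp
      have "\<bar>tau (x, \<beta>) l - tau (x', \<beta>') l'\<bar> > \<delta>" using sep[OF x(2) x(4) ne t t'] .
      moreover have "\<bar>tau (x, \<beta>) l - tau (x', \<beta>') l'\<bar> \<le> \<delta>"
        using fl[of "tau (x, \<beta>) l"] fl[of "tau (x', \<beta>') l'"] e2 by (auto simp: algebra_simps abs_le_iff)
      ultimately show False by simp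
    qed
    ultimately show "p = p'" using e3 pp pp' by simp
  qed
  have finZ: "finite (Z xb)" for xb
  proof -
    let ?lo = "min (f (fst xb) (t1 (fst xb) (snd xb))) (f (fst xb) (t2 (fst xb) (snd xb)))"
    let ?hi = "max (f (fst xb) (t1 (fst xb) (snd xb))) (f (fst xb) (t2 (fst xb) (snd xb)))"
    have "Z xb \<subseteq> {\<lceil>?lo/\<delta>\<rceil>..\<lfloor>?hi/\<delta>\<rfloor>}"
    proof
      fix l assume "l \<in> Z xb"
      then have "?lo \<le> of_int l * \<delta>" "of_int l * \<delta> \<le> ?hi" unfolding Z_def by auto
      then have "?lo/\<delta> \<le> of_int l" "of_int l \<le> ?hi/\<delta>" using \<delta> by (simp_all add: pos_le_divide_eq pos_divide_le_eq)
      then show "l \<in> {\<lceil>?lo/\<delta>\<rceil>..\<lfloor>?hi/\<delta>\<rfloor>}" by (simp add: ceiling_le_iff le_floor_iff)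
    qed
    then show ?thesis using finite_subset by blast
  qed
  have cardZ: "real (card (Z xb)) \<ge> \<Omega>/\<delta> - 1" if "xb \<in> X \<times> B" for xb
  proof -
    obtain x \<beta> where xb: "xb = (x, \<beta>)" by (cases xb)
    have x: "x \<in> X" and \<beta>: "\<beta> \<in> B" using that xb by auto
    let ?lo = "min (f x (t1 x \<beta>)) (f x (t2 x \<beta>))"
    let ?hi = "max (f x (t1 x \<beta>)) (f x (t2 x \<beta>))"
    have "?hi - ?lo = \<bar>f x (t1 x \<beta>) - f x (t2 x \<beta>)\<bar>" by (auto simp: min_def max_def abs_if)
    then have big: "?hi - ?lo \<ge> \<Omega>" using pts[OF x \<beta>] by linarith
    have "{\<lceil>?lo/\<delta>\<rceil>..\<lfloor>?hi/\<delta>\<rfloor>} \<subseteq> Z xb"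
    proof
      fix l assume "l \<in> {\<lceil>?lo/\<delta>\<rceil>..\<lfloor>?hi/\<delta>\<rfloor>}"
      then have "?lo/\<delta> \<le> of_int l" "of_int l \<le> ?hi/\<delta>" by (simp_all add: ceiling_le_iff le_floor_iff)
      then have "?lo \<le> of_int l * \<delta>" "of_int l * \<delta> \<le> ?hi" using \<delta> by (simp_all add: pos_le_divide_eq pos_divide_le_eq)
      then show "l \<in> Z xb" unfolding Z_def xb by simp
    qed
    then have "card {\<lceil>?lo/\<delta>\<rceil>..\<lfloor>?hi/\<delta>\<rfloor>} \<le> card (Z xb)" using finZ card_mono by blast
    then have "real (card {\<lceil>?lo/\<delta>\<rceil>..\<lfloor>?hi/\<delta>\<rfloor>}) \<le> real (card (Z xb))" by simp
    moreover have "real (card {\<lceil>?lo/\<delta>\<rceil>..\<lfloor>?hi/\<delta>\<rfloor>}) \<ge> of_int \<lfloor>?hi/\<delta>\<rfloor> - of_int \<lceil>?lo/\<delta>\<rceil> + 1"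
      by simp
    moreover have "of_int \<lfloor>?hi/\<delta>\<rfloor> - of_int \<lceil>?lo/\<delta>\<rceil> + 1 \<ge> ?hi/\<delta> - ?lo/\<delta> - 1" by linarith
    moreover have "?hi/\<delta> - ?lo/\<delta> \<ge> \<Omega>/\<delta>" using big \<delta> by (simp add: diff_divide_distrib[symmetric] divide_right_mono)
    ultimately show ?thesis by linarith
  qed
  have finS: "finite S" unfolding S_def using finX finB finZ by auto
  have "card S = (\<Sum>xb\<in>X \<times> B. card (Z xb))" unfolding S_def using finX finB finZ by (simp add: card_SigmaI)
  then have "real (card S) = (\<Sum>xb\<in>X \<times> B. real (card (Z xb)))" by simp
  also have "\<dots> \<ge> (\<Sum>xb\<in>X \<times> B. \<Omega>/\<delta> - 1)" by (rule sum_mono) (rule cardZ)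
  finally have "real (card S) \<ge> real (card X) * real (card B) * (\<Omega>/\<delta> - 1)" by (simp add: card_cartesian_product)
  moreover have "card S = card (\<Phi> ` S)" using card_image[OF injP] by simp
  moreover have "card (\<Phi> ` S) \<le> card (cubeset G \<delta>)" using card_mono[OF fin map] .
  ultimately show ?thesis by (simp add: box_count_cubeset)
qed

lemma dim_from_bounds:
  fixes Nf :: "real \<Rightarrow> nat" and c C d \<delta>0 :: real
  assumes c: "c > 0" and C: "C > 0" and d0: "\<delta>0 > 0"
    and bnd: "\<And>\<delta>. 0 < \<delta> \<Longrightarrow> \<delta> < \<delta>0 \<Longrightarrow> c * \<delta> powr (-d) \<le> real (Nf \<delta>) \<and> real (Nf \<delta>) \<le> C * \<delta> powr (-d)"
  shows "((\<lambda>\<delta>. ln (real (Nf \<delta>)) / ln (1 / \<delta>)) \<longlongrightarrow> d) (at_right 0)"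
proof (rule tendsto_sandwich)
  have ev: "eventually (\<lambda>\<delta>. 0 < \<delta> \<and> \<delta> < min \<delta>0 1) (at_right (0::real))"
    using eventually_at_right_real[of 0 "min \<delta>0 1"] d0 by simp
  have key: "d + ln c / ln (1/\<delta>) \<le> ln (real (Nf \<delta>)) / ln (1 / \<delta>) \<and> ln (real (Nf \<delta>)) / ln (1 / \<delta>) \<le> d + ln C / ln (1/\<delta>)"
    if \<delta>: "0 < \<delta>" "\<delta> < min \<delta>0 1" for \<delta>
  proof -
    have L: "ln (1/\<delta>) > 0" using \<delta> by simp
    have b: "c * \<delta> powr (-d) \<le> real (Nf \<delta>)" "real (Nf \<delta>) \<le> C * \<delta> powr (-d)" using bnd \<delta> by auto
    have p: "c * \<delta> powr (-d) > 0" using c \<delta> by simp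
    have lnp: "ln (c * \<delta> powr (-d)) = ln c + d * ln (1/\<delta>)" using c \<delta> by (simp add: ln_mult ln_powr ln_div)
    have lnP: "ln (C * \<delta> powr (-d)) = ln C + d * ln (1/\<delta>)" using C \<delta> by (simp add: ln_mult ln_powr ln_div)
    have "ln (c * \<delta> powr (-d)) \<le> ln (real (Nf \<delta>))" using b p by (subst ln_le_cancel_iff) auto
    then have l1: "ln c + d * ln (1/\<delta>) \<le> ln (real (Nf \<delta>))" using lnp by simp
    have "ln (real (Nf \<delta>)) \<le> ln (C * \<delta> powr (-d))" using b p by (subst ln_le_cancel_iff) auto
    then have l2: "ln (real (Nf \<delta>)) \<le> ln C + d * ln (1/\<delta>)" using lnP by simp
    have e1: "d + ln c / ln (1/\<delta>) = (ln c + d * ln (1/\<delta>)) / ln (1/\<delta>)" using L by (simp add: field_simps)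
    have e2: "d + ln C / ln (1/\<delta>) = (ln C + d * ln (1/\<delta>)) / ln (1/\<delta>)" using L by (simp add: field_simps)
    show ?thesis unfolding e1 e2 using l1 l2 L by (simp add: divide_right_mono)
  qed
  show "eventually (\<lambda>\<delta>. d + ln c / ln (1/\<delta>) \<le> ln (real (Nf \<delta>)) / ln (1 / \<delta>)) (at_right 0)"
    using ev by eventually_elim (use key in blast)
  show "eventually (\<lambda>\<delta>. ln (real (Nf \<delta>)) / ln (1 / \<delta>) \<le> d + ln C / ln (1/\<delta>)) (at_right 0)"
    using ev by eventually_elim (use key in blast)
  show "((\<lambda>\<delta>. d + ln c / ln (1/\<delta>)) \<longlongrightarrow> d) (at_right 0)" by real_asymp
  show "((\<lambda>\<delta>. d + ln C / ln (1/\<delta>)) \<longlongrightarrow> d) (at_right 0)" by real_asymp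
qed

lemma geom_partial_le:
  fixes x :: real assumes "x > 1" shows "(\<Sum>i<k. x ^ i) \<le> x ^ k / (x - 1)"
proof -
  have "(\<Sum>i<k. x ^ i) = (x ^ k - 1) / (x - 1)" using assms by (simp add: geometric_sum)
  also have "\<dots> \<le> x ^ k / (x - 1)" using assms by (simp add: divide_right_mono)
  finally show ?thesis .
qed

locale wf =
  fixes q :: nat and s :: real
  assumes q2: "q \<ge> 2" and s0: "0 < s" and s2: "s < 2"
begin

definition r where "r = real q powr (s - 2)"
definition lam where "lam = (real q)^2"
definition w where "w n x t = complex_of_real (r^n * sin (real q ^ n * x)) * exp (\<i> * of_real ((- (lam^n)) * t))"
definition F where "F x t = (\<Sum>n. w n x t)"

lemma qpos: "real q \<ge> 2" using q2 by simp

lemma r_pos: "r > 0" unfolding r_def using q2 by simp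

lemma r_lt1: "r < 1"
proof -
  have "real q powr (s - 2) < real q powr 0" using q2 s2 by (intro powr_less_mono) auto
  then show ?thesis unfolding r_def using q2 by simp
qed

lemma lam_ge4: "lam \<ge> 4"
proof -
  have "(2::real)^2 \<le> (real q)^2" using qpos by (intro power_mono) auto
  then show ?thesis unfolding lam_def by simp
qed

lemma rlam: "r * lam = real q powr s"
proof -
  have "real q powr 2 = (real q)^2" by simp
  then have "r * lam = real q powr (s - 2) * real q powr 2" unfolding r_def lam_def by simp
  also have "\<dots> = real q powr s" by (simp only: powr_add[symmetric] diff_add_cancel)
  finally show ?thesis .
qed

lemma rlam_gt1: "r * lam > 1"
proof -
  have "real q powr 0 < real q powr s" using q2 s0 by (intro powr_less_mono) auto
  then show ?thesis unfolding rlam using q2 by simp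
qed

lemma rpow: "real q powr (real n * (s - 2)) = r ^ n"
proof -
  have "r ^ n = r powr (real n)" using r_pos by (simp add: powr_realpow)
  also have "\<dots> = real q powr ((s - 2) * real n)" unfolding r_def by (simp add: powr_powr)
  finally show ?thesis by (simp add: mult.commute)
qed

lemma lampow: "(real q) ^ (2 * n) = lam ^ n"
  unfolding lam_def by (simp add: power_mult)

lemma Psi_eq: "Psi q s x t = complex_of_real (norm_const q s) * F x t"
  unfolding Psi_def F_def w_def rpow lampow by simp

lemma Prob_eq: "Prob q s x t = (norm_const q s)^2 * (norm (F x t))^2"
  unfolding Prob_def Psi_eq by (simp add: norm_mult power_mult_distrib)

lemma abs_coef: "\<bar>r^n * sin (real q ^ n * x)\<bar> \<le> r^n"
proof -
  have "\<bar>r^n * sin (real q ^ n * x)\<bar> = r^n * \<bar>sin (real q ^ n * x)\<bar>" using r_pos by (simp add: abs_mult)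
  also have "\<dots> \<le> r^n * 1" using r_pos by (intro mult_left_mono) auto
  finally show ?thesis by simp
qed

lemma norm_w: "norm (w n x t) \<le> r ^ n"
proof -
  have "norm (w n x t) = \<bar>r^n * sin (real q ^ n * x)\<bar>"
    unfolding w_def by (simp only: norm_mult norm_of_real norm_exp_i_times mult_1_right)
  then show ?thesis using abs_coef by simp
qed

lemma summable_r: "summable (\<lambda>n. r ^ n)" using r_pos r_lt1 by simp

lemma summable_w_norm: "summable (\<lambda>n. norm (w (n + k) x t))"
proof -
  have "summable (\<lambda>n. r ^ k * r ^ n)" using summable_r by (rule summable_mult)
  then show ?thesis
  proof (rule summable_comparison_test'[where N=0])
    fix n show "norm (norm (w (n + k) x t)) \<le> r ^ k * r ^ n" using norm_w[of "n+k" x t] by (simp add: power_add mult.commute)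
  qed
qed

lemma summable_w: "summable (\<lambda>n. w (n + k) x t)"
  by (rule summable_norm_cancel[OF summable_w_norm])

lemma tail_bound: "norm (\<Sum>n. w (n + k) x t) \<le> r ^ k / (1 - r)"
proof -
  have "norm (\<Sum>n. w (n + k) x t) \<le> (\<Sum>n. norm (w (n + k) x t))" by (rule summable_norm[OF summable_w_norm])
  also have "\<dots> \<le> (\<Sum>n. r ^ k * r ^ n)"
  proof (rule suminf_le)
    fix n show "norm (w (n + k) x t) \<le> r ^ k * r ^ n" using norm_w[of "n+k" x t] by (simp add: power_add mult.commute)
  qed (use summable_w_norm summable_r in \<open>auto intro: summable_mult\<close>)
  also have "\<dots> = r ^ k * (\<Sum>n. r ^ n)" by (rule suminf_mult[OF summable_r])
  also have "(\<Sum>n. r ^ n) = 1 / (1 - r)" using r_pos r_lt1 by (intro suminf_geometric) simp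
  finally show ?thesis by simp
qed

lemma F_bound: "norm (F x t) \<le> 1 / (1 - r)"
  using tail_bound[of 0 x t] unfolding F_def by simp

lemma F_split: "F x t = (\<Sum>n<k. w n x t) + (\<Sum>n. w (n + k) x t)"
proof -
  have "summable (\<lambda>n. w n x t)" using summable_w[of 0] by simp
  then show ?thesis unfolding F_def using suminf_split_initial_segment[of "\<lambda>n. w n x t" k] by (simp only: add.commute)
qed

lemma w_lip_t: "norm (w n x t - w n x t') \<le> r ^ n * lam ^ n * \<bar>t - t'\<bar>"
proof -
  let ?c = "r^n * sin (real q ^ n * x)"
  have "w n x t - w n x t' = complex_of_real ?c * (exp (\<i> * of_real ((- (lam^n)) * t)) - exp (\<i> * of_real ((- (lam^n)) * t')))"
    unfolding w_def by (simp only: right_diff_distrib)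
  then have "norm (w n x t - w n x t') = \<bar>?c\<bar> * norm (exp (\<i> * of_real ((- (lam^n)) * t)) - exp (\<i> * of_real ((- (lam^n)) * t')))"
    by (simp only: norm_mult norm_of_real)
  also have "\<dots> \<le> r^n * \<bar>(- (lam^n)) * t - (- (lam^n)) * t'\<bar>"
    by (rule mult_mono[OF abs_coef norm_expi_diff]) (use r_pos in auto)
  also have "\<bar>(- (lam^n)) * t - (- (lam^n)) * t'\<bar> = lam ^ n * \<bar>t - t'\<bar>"
  proof -
    have "(- (lam^n)) * t - (- (lam^n)) * t' = (- (lam^n)) * (t - t')" by (simp only: right_diff_distrib)
    then show ?thesis using lam_ge4 by (simp only: abs_mult abs_minus_cancel) simp
  qed
  finally show ?thesis by (simp add: mult.assoc)
qed

lemma w_lip_x: "norm (w n x t - w n x' t) \<le> r ^ n * real q ^ n * \<bar>x - x'\<bar>"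
proof -
  let ?e = "exp (\<i> * of_real ((- (lam^n)) * t))"
  have "w n x t - w n x' t = complex_of_real (r^n * sin (real q ^ n * x) - r^n * sin (real q ^ n * x')) * ?e"
    unfolding w_def by (simp only: of_real_diff left_diff_distrib)
  then have "norm (w n x t - w n x' t) = \<bar>r^n * sin (real q ^ n * x) - r^n * sin (real q ^ n * x')\<bar>"
    by (simp only: norm_mult norm_of_real norm_exp_i_times mult_1_right)
  also have "\<dots> = r^n * \<bar>sin (real q ^ n * x) - sin (real q ^ n * x')\<bar>"
    using r_pos by (simp add: abs_mult flip: right_diff_distrib)
  also have "\<dots> \<le> r^n * \<bar>real q ^ n * x - real q ^ n * x'\<bar>"
    using r_pos abs_sin_diff by (intro mult_left_mono) auto
  also have "\<dots> = r ^ n * real q ^ n * \<bar>x - x'\<bar>" by (simp add: abs_mult flip: right_diff_distrib)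
  finally show ?thesis .
qed

end

definition Ei :: "real \<Rightarrow> real \<Rightarrow> complex" where
  "Ei a u = exp (\<i> * of_real (a * u))"

lemma Ei_mult: "Ei a u * Ei b u = Ei (a + b) u"
  unfolding Ei_def by (simp add: exp_add[symmetric] algebra_simps)

lemma Ei_cnj: "cnj (Ei a u) = Ei (- a) u"
  unfolding Ei_def by (simp add: exp_cnj)

lemma Ei_norm [simp]: "norm (Ei a u) = 1"
  unfolding Ei_def by simp

lemma Ei_add: "Ei a (u + v) = Ei a u * Ei a v"
  unfolding Ei_def by (simp add: exp_add[symmetric] algebra_simps)

lemma Ei_diff: "norm (Ei a u - Ei a v) \<le> \<bar>a\<bar> * \<bar>u - v\<bar>"
proof -
  have "norm (Ei a u - Ei a v) \<le> \<bar>a * u - a * v\<bar>" unfolding Ei_def by (rule norm_expi_diff)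
  also have "\<dots> = \<bar>a\<bar> * \<bar>u - v\<bar>" by (simp add: abs_mult flip: right_diff_distrib)
  finally show ?thesis .
qed

lemma Ei_minus1: "norm (Ei a h - 1) \<le> \<bar>a\<bar> * \<bar>h\<bar>"
  using Ei_diff[of a h 0] by (simp add: Ei_def)

lemma Ei_minus1_2: "norm (Ei a h - 1) \<le> 2"
  using norm_expi_diff2[of "a*h" 0] by (simp add: Ei_def)

lemma Dop_Ei: "Dop M h (Ei a) t = (Ei a h - 1) ^ M * Ei a t"
  unfolding Ei_def using Dop_expi[of M h a t] by simp

lemma Ei_int: "Ei (2 * pi * of_int m) 1 = 1"
proof -
  have "exp (0 + \<i> * (of_int m * (of_real pi * 2))) = exp 0" by (rule exp_plus_2pin)
  then show ?thesis unfolding Ei_def by (simp add: algebra_simps)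
qed

lemma Ei_plus_period: "Ei a (u + v) = Ei a u" if "a * v = 2 * pi * of_int m"
proof -
  have "Ei a v = Ei (a * v) 1" unfolding Ei_def by simp
  also have "\<dots> = 1" using that Ei_int by simp
  finally show ?thesis by (simp add: Ei_add)
qed

lemma norm_Re_plus_cnj: "norm (z + cnj z) = 2 * \<bar>Re z\<bar>"
proof -
  have "z + cnj z = complex_of_real (2 * Re z)" by (simp add: complex_add_cnj)
  then show ?thesis by simp
qed

context wf begin

definition cf where "cf n x = r ^ n * sin (real q ^ n * x)"

lemma w_Ex: "w n x t = complex_of_real (cf n x) * Ei (- (lam ^ n)) t"
  unfolding w_def cf_def Ei_def ..

lemma abs_cf: "\<bar>cf n x\<bar> \<le> r ^ n"
  unfolding cf_def by (rule abs_coef)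

definition L where "L k x t = (\<Sum>n<k. w n x t)"
definition H where "H k x t = (\<Sum>n. w (n + Suc k) x t)"

lemma F_LBH: "F x t = L k x t + w k x t + H k x t"
  using F_split[of x t "Suc k"] unfolding L_def H_def by simp

lemma H_bound: "norm (H k x t) \<le> r ^ Suc k / (1 - r)"
  unfolding H_def by (rule tail_bound)

lemma lam_pos: "lam > 0" using lam_ge4 by simp

lemma L_lip: "norm (L k x t - L k x t') \<le> (r * lam) ^ k / (r * lam - 1) * \<bar>t - t'\<bar>"
proof -
  have "norm (L k x t - L k x t') = norm (\<Sum>n<k. w n x t - w n x t')" unfolding L_def by (simp add: sum_subtractf)
  also have "\<dots> \<le> (\<Sum>n<k. norm (w n x t - w n x t'))" by (rule norm_sum)
  also have "\<dots> \<le> (\<Sum>n<k. (r * lam) ^ n * \<bar>t - t'\<bar>)"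
    by (rule sum_mono) (use w_lip_t in \<open>simp add: power_mult_distrib\<close>)
  also have "\<dots> = (\<Sum>n<k. (r * lam) ^ n) * \<bar>t - t'\<bar>" by (simp add: sum_distrib_right)
  also have "\<dots> \<le> (r * lam) ^ k / (r * lam - 1) * \<bar>t - t'\<bar>"
    by (rule mult_right_mono[OF geom_partial_le[OF rlam_gt1]]) simp
  finally show ?thesis .
qed

lemma H_periodic:
  assumes h: "h = 2 * pi / (real q * lam ^ k)"
  shows "H k x (u + h) = H k x u"
proof -
  have "w (n + Suc k) x (u + h) = w (n + Suc k) x u" for n
  proof -
    have q0: "real q > 0" using qpos by simp
    have a: "lam ^ (n + Suc k) = lam ^ k * lam ^ (Suc n)" by (metis add.commute add_Suc_right power_add)
    have b: "lam ^ (Suc n) = real q ^ (2 * Suc n)" unfolding lam_def by (simp only: power_mult)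
    have c: "real q ^ (2 * Suc n) = real q * real q ^ (2 * n + 1)" by simp
    have "lam ^ (n + Suc k) = lam ^ k * (real q * real q ^ (2 * n + 1))" unfolding a b c ..
    then have "(- (lam ^ (n + Suc k))) * h = 2 * pi * of_int (- int (q ^ (2 * n + 1)))"
      unfolding h using q0 lam_pos by (simp add: field_simps)
    then have "Ei (- (lam ^ (n + Suc k))) (u + h) = Ei (- (lam ^ (n + Suc k))) u" by (rule Ei_plus_period)
    then show ?thesis unfolding w_Ex by simp
  qed
  then show ?thesis unfolding H_def by simp
qed

lemma L_Ei: "L k x u = (\<Sum>n<k. complex_of_real (cf n x) * Ei (- (lam ^ n)) u)"
  unfolding L_def w_Ex ..

lemma Dop_L: "norm (Dop M h (L k x) t) \<le> (\<Sum>n<k. r ^ n * (lam ^ n * \<bar>h\<bar>) ^ M)"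
proof -
  have "Dop M h (L k x) t = (\<Sum>n<k. complex_of_real (cf n x) * ((Ei (- (lam ^ n)) h - 1) ^ M * Ei (- (lam ^ n)) t))"
    unfolding L_Ei by (simp add: Dop_sum Dop_cmult Dop_Ei)
  then have "norm (Dop M h (L k x) t) \<le> (\<Sum>n<k. norm (complex_of_real (cf n x) * ((Ei (- (lam ^ n)) h - 1) ^ M * Ei (- (lam ^ n)) t)))"
    by (simp only: norm_sum)
  also have "\<dots> \<le> (\<Sum>n<k. r ^ n * (lam ^ n * \<bar>h\<bar>) ^ M)"
  proof (rule sum_mono)
    fix n
    have "norm (Ei (- (lam ^ n)) h - 1) \<le> lam ^ n * \<bar>h\<bar>" using Ei_minus1[of "- (lam ^ n)" h] lam_pos by simp
    then have "norm (Ei (- (lam ^ n)) h - 1) ^ M \<le> (lam ^ n * \<bar>h\<bar>) ^ M" by (intro power_mono) auto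
    then show "norm (complex_of_real (cf n x) * ((Ei (- (lam ^ n)) h - 1) ^ M * Ei (- (lam ^ n)) t)) \<le> r ^ n * (lam ^ n * \<bar>h\<bar>) ^ M"
      using abs_cf[of n x] by (simp add: norm_mult norm_power mult_mono)
  qed
  finally show ?thesis .
qed

lemma Dop_w: "norm (Dop M h (w k x) t) \<le> r ^ k * 2 ^ M"
proof -
  have "Dop M h (w k x) t = complex_of_real (cf k x) * ((Ei (- (lam ^ k)) h - 1) ^ M * Ei (- (lam ^ k)) t)"
    unfolding w_Ex by (simp add: Dop_cmult Dop_Ei)
  moreover have "norm (Ei (- (lam ^ k)) h - 1) ^ M \<le> 2 ^ M" by (intro power_mono Ei_minus1_2) auto
  ultimately show ?thesis using abs_cf[of k x] by (simp add: norm_mult norm_power mult_mono)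
qed

lemma pow_absdiff_le: "0 \<le> a \<Longrightarrow> 0 \<le> b \<Longrightarrow> \<bar>a - b\<bar> ^ M \<le> a ^ M + (b::real) ^ M"
proof -
  assume a: "0 \<le> a" and b: "0 \<le> b"
  have "\<bar>a - b\<bar> ^ M \<le> (max a b) ^ M" using a b by (intro power_mono) auto
  also have "\<dots> \<le> a ^ M + b ^ M" using a b by (auto simp: max_def)
  finally show ?thesis .
qed

lemma LL_expand: "L k x u * cnj (L k x u) = (\<Sum>n<k. \<Sum>m<k. complex_of_real (cf n x * cf m x) * Ei (lam ^ m - lam ^ n) u)"
proof -
  have "L k x u * cnj (L k x u) = (\<Sum>n<k. \<Sum>m<k. (complex_of_real (cf n x) * Ei (- (lam ^ n)) u) * cnj (complex_of_real (cf m x) * Ei (- (lam ^ m)) u))"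
    unfolding L_Ei cnj_sum sum_product ..
  also have "\<dots> = (\<Sum>n<k. \<Sum>m<k. complex_of_real (cf n x * cf m x) * Ei (lam ^ m - lam ^ n) u)"
  proof (intro sum.cong refl)
    fix n m
    have "(complex_of_real (cf n x) * Ei (- (lam ^ n)) u) * cnj (complex_of_real (cf m x) * Ei (- (lam ^ m)) u)
      = complex_of_real (cf n x * cf m x) * (Ei (- (lam ^ n)) u * Ei (lam ^ m) u)"
      by (simp add: Ei_cnj)
    also have "\<dots> = complex_of_real (cf n x * cf m x) * Ei (lam ^ m - lam ^ n) u" by (simp add: Ei_mult)
    finally show "(complex_of_real (cf n x) * Ei (- (lam ^ n)) u) * cnj (complex_of_real (cf m x) * Ei (- (lam ^ m)) u)
      = complex_of_real (cf n x * cf m x) * Ei (lam ^ m - lam ^ n) u" .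
  qed
  finally show ?thesis .
qed

lemma Dop_LL: "norm (Dop M h (\<lambda>u. L k x u * cnj (L k x u)) t) \<le> 2 / (1 - r) * (\<Sum>n<k. r ^ n * (lam ^ n * \<bar>h\<bar>) ^ M)"
proof -
  define A where "A n = (lam ^ n * \<bar>h\<bar>) ^ M" for n
  have A0: "A n \<ge> 0" for n unfolding A_def using lam_pos by simp
  have "Dop M h (\<lambda>u. L k x u * cnj (L k x u)) t = (\<Sum>n<k. \<Sum>m<k. complex_of_real (cf n x * cf m x) * ((Ei (lam ^ m - lam ^ n) h - 1) ^ M * Ei (lam ^ m - lam ^ n) t))"
    unfolding LL_expand by (simp add: Dop_sum Dop_cmult Dop_Ei)
  then have "norm (Dop M h (\<lambda>u. L k x u * cnj (L k x u)) t) \<le> (\<Sum>n<k. norm (\<Sum>m<k. complex_of_real (cf n x * cf m x) * ((Ei (lam ^ m - lam ^ n) h - 1) ^ M * Ei (lam ^ m - lam ^ n) t)))"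
    by (simp only: norm_sum)
  also have "\<dots> \<le> (\<Sum>n<k. \<Sum>m<k. norm (complex_of_real (cf n x * cf m x) * ((Ei (lam ^ m - lam ^ n) h - 1) ^ M * Ei (lam ^ m - lam ^ n) t)))"
    by (intro sum_mono norm_sum)
  also have "\<dots> \<le> (\<Sum>n<k. \<Sum>m<k. r ^ n * r ^ m * (A n + A m))"
  proof (intro sum_mono)
    fix n m
    have "norm (Ei (lam ^ m - lam ^ n) h - 1) \<le> \<bar>lam ^ m - lam ^ n\<bar> * \<bar>h\<bar>" by (rule Ei_minus1)
    then have "norm (Ei (lam ^ m - lam ^ n) h - 1) ^ M \<le> (\<bar>lam ^ m - lam ^ n\<bar> * \<bar>h\<bar>) ^ M" by (intro power_mono) auto
    also have "\<dots> = \<bar>lam ^ m * \<bar>h\<bar> - lam ^ n * \<bar>h\<bar>\<bar> ^ M"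
    proof -
      have "\<bar>lam ^ m - lam ^ n\<bar> * \<bar>h\<bar> = \<bar>lam ^ m * \<bar>h\<bar> - lam ^ n * \<bar>h\<bar>\<bar>"
        by (metis abs_abs abs_mult left_diff_distrib)
      then show ?thesis by simp
    qed
    also have "\<dots> \<le> A n + A m" unfolding A_def using lam_pos
      by (subst add.commute) (intro pow_absdiff_le; simp)
    finally have e: "norm (Ei (lam ^ m - lam ^ n) h - 1) ^ M \<le> A n + A m" .
    have c: "\<bar>cf n x * cf m x\<bar> \<le> r ^ n * r ^ m" unfolding abs_mult
      by (intro mult_mono abs_cf) (use r_pos in auto)
    show "norm (complex_of_real (cf n x * cf m x) * ((Ei (lam ^ m - lam ^ n) h - 1) ^ M * Ei (lam ^ m - lam ^ n) t)) \<le> r ^ n * r ^ m * (A n + A m)"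
      using mult_mono[OF c e] r_pos by (simp add: norm_mult norm_power abs_mult)
  qed
  also have "\<dots> = 2 * ((\<Sum>m<k. r ^ m) * (\<Sum>n<k. r ^ n * A n))"
  proof -
    have e1: "(\<Sum>n<k. \<Sum>m<k. r ^ n * r ^ m * (A n + A m)) = (\<Sum>n<k. \<Sum>m<k. r ^ n * r ^ m * A n) + (\<Sum>n<k. \<Sum>m<k. r ^ n * r ^ m * A m)"
      by (simp add: distrib_left sum.distrib)
    have e2: "(\<Sum>n<k. \<Sum>m<k. r ^ n * r ^ m * A m) = (\<Sum>m<k. \<Sum>n<k. r ^ n * r ^ m * A m)" by (rule sum.swap)
    have e3: "(\<Sum>m<k. \<Sum>n<k. r ^ n * r ^ m * A m) = (\<Sum>n<k. \<Sum>m<k. r ^ n * r ^ m * A n)"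
      by (intro sum.cong refl) (simp add: mult_ac)
    have e4: "(\<Sum>n<k. r ^ n * A n) * (\<Sum>m<k. r ^ m) = (\<Sum>n<k. \<Sum>m<k. r ^ n * r ^ m * A n)"
      unfolding sum_product by (intro sum.cong refl) (simp add: mult_ac)
    show ?thesis unfolding e1 e2 e3 e4[symmetric] by (simp add: mult_ac)
  qed
  also have "\<dots> \<le> 2 * (1 / (1 - r) * (\<Sum>n<k. r ^ n * A n))"
  proof -
    have "(\<Sum>m<k. r ^ m) \<le> 1 / (1 - r)"
    proof -
      have "(\<Sum>m<k. r ^ m) = (1 - r ^ k) / (1 - r)" using r_lt1 by (simp add: geometric_sum field_simps)
      also have "\<dots> \<le> 1 / (1 - r)" using r_lt1 r_pos by (simp add: divide_right_mono)
      finally show ?thesis .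
    qed
    moreover have "(\<Sum>n<k. r ^ n * A n) \<ge> 0" using r_pos A0 by (intro sum_nonneg) simp
    ultimately show ?thesis by (intro mult_left_mono mult_right_mono) auto
  qed
  finally show ?thesis unfolding A_def by simp
qed

lemma cnj_w: "cnj (w n x u) = complex_of_real (cf n x) * Ei (lam ^ n) u"
  unfolding w_Ex by (simp add: Ei_cnj)

lemma w_cnj_w: "w n x u * cnj (w n x u) = complex_of_real ((cf n x)^2)"
proof -
  have "w n x u * cnj (w n x u) = complex_of_real (cf n x * cf n x) * (Ei (- (lam ^ n)) u * Ei (lam ^ n) u)"
    unfolding w_Ex by (simp add: Ei_cnj)
  also have "Ei (- (lam ^ n)) u * Ei (lam ^ n) u = 1" unfolding Ei_mult by (simp add: Ei_def)
  finally show ?thesis by (simp add: power2_eq_square)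
qed

lemma ring9: "(a + b + c) * cnj (a + b + c) = a * cnj a + b * cnj b + c * cnj c + (a * cnj b + cnj (a * cnj b))
   + (a * cnj c + cnj (a * cnj c)) + (b * cnj c + cnj (b * cnj c))"
  by (simp add: algebra_simps)

lemma norm4: "norm (a - b - c - d) \<le> norm a + norm b + norm c + norm (d::complex)"
  using norm_triangle_ineq4[of "a - b - c" d] norm_triangle_ineq4[of "a - b" c] norm_triangle_ineq4[of a b] by linarith

lemma norm_plus_cnj_le: "norm (z + cnj z) \<le> 2 * norm z"
  using norm_triangle_ineq[of z "cnj z"] by simp

lemma core:
  assumes M: "M \<ge> 1" and h: "h = 2 * pi / (real q * lam ^ k)"
  defines "S \<equiv> (\<Sum>n<k. r ^ n * (lam ^ n * \<bar>h\<bar>) ^ M)"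
  shows "norm (Dop M h (\<lambda>u. F x u * cnj (F x u)) t) \<ge>
     2 * \<bar>cf k x\<bar> * \<bar>Re (Dop M h (\<lambda>u. L k x u * Ei (lam ^ k) u) t)\<bar>
     - 2 / (1 - r) * S - 2 * (r ^ Suc k / (1 - r)) * S - 2 * (r ^ Suc k / (1 - r)) * (r ^ k * 2 ^ M)"
proof -
  let ?L = "L k x" and ?B = "w k x" and ?H = "H k x"
  have tn: "0 \<le> r ^ Suc k / (1 - r)" "0 \<le> r * r ^ k / (1 - r)" using r_pos r_lt1 by simp_all
  define X where "X u = ?L u * cnj (?B u)" for u
  define Y where "Y u = ?L u * cnj (?H u)" for u
  define V where "V u = ?B u * cnj (?H u)" for u
  have g: "(\<lambda>u. F x u * cnj (F x u)) = (\<lambda>u. ?L u * cnj (?L u) + ?B u * cnj (?B u) + ?H u * cnj (?H u)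
      + (X u + cnj (X u)) + (Y u + cnj (Y u)) + (V u + cnj (V u)))"
    unfolding X_def Y_def V_def by (rule ext) (simp only: F_LBH[of x _ k] ring9)
  have Hp: "\<And>u. ?H (u + h) = ?H u" using H_periodic[OF h] .
  have dB: "Dop M h (\<lambda>u. ?B u * cnj (?B u)) t = 0"
    unfolding w_cnj_w by (rule Dop_const[OF M])
  have dH: "Dop M h (\<lambda>u. ?H u * cnj (?H u)) t = 0"
    by (rule Dop_periodic[OF _ M]) (simp add: Hp)
  have dY: "Dop M h Y t = cnj (?H t) * Dop M h ?L t"
  proof -
    have "Y = (\<lambda>u. cnj (?H u) * ?L u)" unfolding Y_def by (simp add: mult.commute)
    then show ?thesis using Dop_periodic_mult[of "\<lambda>u. cnj (?H u)" h M ?L t] Hp by simp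
  qed
  have dV: "Dop M h V t = cnj (?H t) * Dop M h ?B t"
  proof -
    have "V = (\<lambda>u. cnj (?H u) * ?B u)" unfolding V_def by (simp add: mult.commute)
    then show ?thesis using Dop_periodic_mult[of "\<lambda>u. cnj (?H u)" h M ?B t] Hp by simp
  qed
  have dX: "Dop M h X t = complex_of_real (cf k x) * Dop M h (\<lambda>u. ?L u * Ei (lam ^ k) u) t"
  proof -
    have "X = (\<lambda>u. complex_of_real (cf k x) * (?L u * Ei (lam ^ k) u))" unfolding X_def cnj_w by (simp add: mult_ac)
    then show ?thesis by (simp add: Dop_cmult)
  qed
  have Dg: "Dop M h (\<lambda>u. F x u * cnj (F x u)) t = Dop M h (\<lambda>u. ?L u * cnj (?L u)) t + 0 + 0
     + (Dop M h X t + cnj (Dop M h X t)) + (Dop M h Y t + cnj (Dop M h Y t)) + (Dop M h V t + cnj (Dop M h V t))"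
    unfolding g by (simp only: Dop_add Dop_cnj dB dH)
  have "Dop M h X t + cnj (Dop M h X t) = Dop M h (\<lambda>u. F x u * cnj (F x u)) t - Dop M h (\<lambda>u. ?L u * cnj (?L u)) t
      - (Dop M h Y t + cnj (Dop M h Y t)) - (Dop M h V t + cnj (Dop M h V t))"
    unfolding Dg by simp
  then have "norm (Dop M h X t + cnj (Dop M h X t)) \<le> norm (Dop M h (\<lambda>u. F x u * cnj (F x u)) t) + norm (Dop M h (\<lambda>u. ?L u * cnj (?L u)) t)
      + norm (Dop M h Y t + cnj (Dop M h Y t)) + norm (Dop M h V t + cnj (Dop M h V t))"
    using norm4 by metis
  moreover have "norm (Dop M h X t + cnj (Dop M h X t)) = 2 * \<bar>cf k x\<bar> * \<bar>Re (Dop M h (\<lambda>u. ?L u * Ei (lam ^ k) u) t)\<bar>"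
    unfolding norm_Re_plus_cnj dX by (simp add: abs_mult)
  moreover have "norm (Dop M h (\<lambda>u. ?L u * cnj (?L u)) t) \<le> 2 / (1 - r) * S" unfolding S_def by (rule Dop_LL)
  moreover have "norm (Dop M h Y t + cnj (Dop M h Y t)) \<le> 2 * (r ^ Suc k / (1 - r)) * S"
  proof -
    have "norm (Dop M h Y t) \<le> (r ^ Suc k / (1 - r)) * S"
      unfolding dY norm_mult complex_mod_cnj S_def
      by (rule mult_mono[OF H_bound Dop_L tn(1) norm_ge_zero])
    then show ?thesis using norm_plus_cnj_le[of "Dop M h Y t"] by linarith
  qed
  moreover have "norm (Dop M h V t + cnj (Dop M h V t)) \<le> 2 * (r ^ Suc k / (1 - r)) * (r ^ k * 2 ^ M)"
  proof -
    have "norm (Dop M h V t) \<le> (r ^ Suc k / (1 - r)) * (r ^ k * 2 ^ M)"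
      unfolding dV norm_mult complex_mod_cnj
      by (rule mult_mono[OF H_bound Dop_w tn(1) norm_ge_zero])
    then show ?thesis using norm_plus_cnj_le[of "Dop M h V t"] by linarith
  qed
  ultimately show ?thesis by linarith
qed

lemma abs_Re_diff: "\<bar>Re a\<bar> \<ge> \<bar>Re b\<bar> - norm (a - b)"
proof -
  have "\<bar>Re (a - b)\<bar> \<le> norm (a - b)" by (rule abs_Re_le_cmod)
  then show ?thesis by simp
qed

definition Lip where "Lip k = (r * lam) ^ k / (r * lam - 1)"

lemma Lip_nonneg: "Lip k \<ge> 0" unfolding Lip_def using rlam_gt1 r_pos lam_pos by simp

lemma main_term:
  assumes M: "M \<ge> 1" and hpos: "h > 0"
  shows "\<bar>Re (Dop M h (\<lambda>u. L k x u * Ei (lam ^ k) u) t)\<bar> \<ge>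
     \<bar>Re (Ei (lam ^ k) t * (Ei (lam ^ k) h - 1) ^ M * L k x t)\<bar> - 2 ^ M * (Lip k * (real M * h))"
proof -
  have "norm (Dop M h (\<lambda>u. L k x u * exp (\<i> * of_real (lam ^ k * u))) t
     - exp (\<i> * of_real (lam ^ k * t)) * (exp (\<i> * of_real (lam ^ k * h)) - 1) ^ M * L k x t) \<le> 2 ^ M * (Lip k * (real M * h))"
  proof (rule Dop_mult_expi)
    fix j assume j: "j \<le> M"
    have "norm (L k x (t + real j * h) - L k x t) \<le> Lip k * \<bar>(t + real j * h) - t\<bar>"
      unfolding Lip_def by (rule L_lip)
    also have "\<dots> \<le> Lip k * (real M * h)"
      using j hpos Lip_nonneg by (intro mult_left_mono) auto
    finally show "norm (L k x (t + real j * h) - L k x t) \<le> Lip k * (real M * h)" .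
  qed
  then have "norm (Dop M h (\<lambda>u. L k x u * Ei (lam ^ k) u) t
     - Ei (lam ^ k) t * (Ei (lam ^ k) h - 1) ^ M * L k x t) \<le> 2 ^ M * (Lip k * (real M * h))"
    unfolding Ei_def .
  then show ?thesis using abs_Re_diff[of "Ei (lam ^ k) t * (Ei (lam ^ k) h - 1) ^ M * L k x t" "Dop M h (\<lambda>u. L k x u * Ei (lam ^ k) u) t"]
    by linarith
qed

lemma phase_choice:
  assumes "lam ^ k > 0"
  shows "\<exists>t\<in>{t0, t0 + pi / (2 * lam ^ k)}. \<bar>Re (Ei (lam ^ k) t * z)\<bar> \<ge> norm z / 2"
proof -
  have "lam ^ k \<noteq> 0" using lam_pos by simp
  then have e: "lam ^ k * (pi / (2 * lam ^ k)) = pi / 2" by (simp add: field_simps)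
  have "Ei (lam ^ k) (pi / (2 * lam ^ k)) = exp (\<i> * of_real (pi / 2))"
    unfolding Ei_def e ..
  also have "\<dots> = cis (pi / 2)" by (simp add: cis_conv_exp)
  also have "\<dots> = \<i>" by (simp add: complex_eq_iff)
  finally have i: "Ei (lam ^ k) (t0 + pi / (2 * lam ^ k)) = Ei (lam ^ k) t0 * \<i>" by (simp add: Ei_add)
  let ?w = "Ei (lam ^ k) t0 * z"
  have "norm ?w = norm z" by (simp add: norm_mult)
  moreover have "norm ?w \<le> \<bar>Re ?w\<bar> + \<bar>Im ?w\<bar>" by (rule cmod_le)
  moreover have "Re (Ei (lam ^ k) (t0 + pi / (2 * lam ^ k)) * z) = - Im ?w" unfolding i by simp
  ultimately have a: "\<bar>Re ?w\<bar> + \<bar>Im ?w\<bar> \<ge> norm z" and b: "\<bar>Re (Ei (lam ^ k) (t0 + pi / (2 * lam ^ k)) * z)\<bar> = \<bar>Im ?w\<bar>"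
    by auto
  show ?thesis
  proof (cases "\<bar>Re ?w\<bar> \<ge> \<bar>Im ?w\<bar>")
    case True
    then have "\<bar>Re ?w\<bar> \<ge> norm z / 2" using a by linarith
    then show ?thesis by blast
  next
    case False
    then have "\<bar>Re (Ei (lam ^ k) (t0 + pi / (2 * lam ^ k)) * z)\<bar> \<ge> norm z / 2" using a b by linarith
    then show ?thesis by blast
  qed
qed

lemma osc_k:
  assumes M: "M \<ge> 1" and h: "h = 2 * pi / (real q * lam ^ k)"
  defines "S \<equiv> (\<Sum>n<k. r ^ n * (lam ^ n * \<bar>h\<bar>) ^ M)" and "Z \<equiv> norm (Ei (lam ^ k) h - 1)"
  shows "\<exists>t\<in>{t0, t0 + pi / (2 * lam ^ k)}. norm (Dop M h (\<lambda>u. F x u * cnj (F x u)) t) \<ge>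
     2 * \<bar>cf k x\<bar> * (Z ^ M * norm (L k x t0) / 2 - Z ^ M * (Lip k * (pi / (2 * lam ^ k))) - 2 ^ M * (Lip k * (real M * h)))
     - 2 / (1 - r) * S - 2 * (r ^ Suc k / (1 - r)) * S - 2 * (r ^ Suc k / (1 - r)) * (r ^ k * 2 ^ M)"
proof -
  have lk: "lam ^ k > 0" using lam_pos by simp
  have hpos: "h > 0" unfolding h using lk qpos by simp
  let ?z = "(Ei (lam ^ k) h - 1) ^ M * L k x t0"
  obtain t where t: "t \<in> {t0, t0 + pi / (2 * lam ^ k)}" and ph: "\<bar>Re (Ei (lam ^ k) t * ?z)\<bar> \<ge> norm ?z / 2"
    using phase_choice[OF lk, of t0 ?z] by blast
  have nz: "norm ?z = Z ^ M * norm (L k x t0)" unfolding Z_def by (simp add: norm_mult norm_power)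
  have dt: "\<bar>t - t0\<bar> \<le> pi / (2 * lam ^ k)" using t lk by auto
  have "norm (Ei (lam ^ k) t * (Ei (lam ^ k) h - 1) ^ M * L k x t - Ei (lam ^ k) t * ?z)
      = Z ^ M * norm (L k x t - L k x t0)"
    unfolding Z_def by (simp add: norm_mult norm_power flip: right_diff_distrib mult.assoc)
  also have "\<dots> \<le> Z ^ M * (Lip k * (pi / (2 * lam ^ k)))"
  proof (rule mult_left_mono)
    have "norm (L k x t - L k x t0) \<le> Lip k * \<bar>t - t0\<bar>" unfolding Lip_def by (rule L_lip)
    also have "\<dots> \<le> Lip k * (pi / (2 * lam ^ k))" using dt Lip_nonneg by (rule mult_left_mono)
    finally show "norm (L k x t - L k x t0) \<le> Lip k * (pi / (2 * lam ^ k))" .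
  qed (simp add: Z_def)
  finally have "\<bar>Re (Ei (lam ^ k) t * (Ei (lam ^ k) h - 1) ^ M * L k x t)\<bar> \<ge> norm ?z / 2 - Z ^ M * (Lip k * (pi / (2 * lam ^ k)))"
    using abs_Re_diff[of "Ei (lam ^ k) t * ?z" "Ei (lam ^ k) t * (Ei (lam ^ k) h - 1) ^ M * L k x t"] ph by linarith
  then have "\<bar>Re (Dop M h (\<lambda>u. L k x u * Ei (lam ^ k) u) t)\<bar> \<ge>
      Z ^ M * norm (L k x t0) / 2 - Z ^ M * (Lip k * (pi / (2 * lam ^ k))) - 2 ^ M * (Lip k * (real M * h))"
    using main_term[OF M hpos, where k=k and x=x and t=t] nz by linarith
  then have "2 * \<bar>cf k x\<bar> * \<bar>Re (Dop M h (\<lambda>u. L k x u * Ei (lam ^ k) u) t)\<bar> \<ge>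
      2 * \<bar>cf k x\<bar> * (Z ^ M * norm (L k x t0) / 2 - Z ^ M * (Lip k * (pi / (2 * lam ^ k))) - 2 ^ M * (Lip k * (real M * h)))"
    by (intro mult_left_mono) auto
  then show ?thesis using core[OF M h, of x t] t unfolding S_def by (intro bexI[OF _ t]) linarith
qed

end

lemma ev_pow_small:
  fixes x y :: real assumes "0 \<le> x" "x < 1" "y > 0"
  shows "\<exists>N. \<forall>n\<ge>N. x ^ n < y"
proof -
  obtain N where N: "x ^ N < y" using real_arch_pow_inv[OF assms(3,2)] by blast
  have "x ^ n < y" if "n \<ge> N" for n
  proof -
    have "x ^ n \<le> x ^ N" using assms that by (intro power_decreasing) auto
    then show ?thesis using N by linarith
  qed
  then show ?thesis by blast
qed

lemma ev_pow_large:
  fixes x y :: real assumes "x > 1"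
  shows "\<exists>N. \<forall>n\<ge>N. y < x ^ n"
proof -
  obtain N where N: "y < x ^ N" using real_arch_pow[OF assms] by blast
  have "y < x ^ n" if "n \<ge> N" for n
  proof -
    have "x ^ N \<le> x ^ n" using assms that by (intro power_increasing) auto
    then show ?thesis using N by linarith
  qed
  then show ?thesis by blast
qed

context wf begin

lemma sin_pi_q_pos: "sin (pi / real q) > 0"
  using sin_pi_divide_n_gt_0[of q] q2 by simp

lemma w_x0: "n \<ge> 1 \<Longrightarrow> w n (pi / real q) t = 0"
proof -
  assume n: "n \<ge> 1"
  have e: "real q ^ n * (pi / real q) = real (q ^ (n - 1)) * pi"
  proof -
    have "real q ^ n = real q * real q ^ (n - 1)" using n by (metis power_eq_if not_one_le_zero)
    then show ?thesis using qpos by (simp add: field_simps)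
  qed
  have "sin (real q ^ n * (pi / real q)) = 0" by (simp only: e sin_npi)
  then have "cf n (pi / real q) = 0" unfolding cf_def by simp
  then show ?thesis unfolding w_Ex by simp
qed

lemma L_x0: "k \<ge> 1 \<Longrightarrow> L k (pi / real q) t = w 0 (pi / real q) t"
proof -
  assume k: "k \<ge> 1"
  have "L k (pi / real q) t = (\<Sum>n<k. if n = 0 then w 0 (pi / real q) t else 0)"
    unfolding L_def by (intro sum.cong refl) (auto simp: w_x0)
  also have "\<dots> = w 0 (pi / real q) t" using k by simp
  finally show ?thesis .
qed

lemma norm_w0_x0: "norm (w 0 (pi / real q) t) = sin (pi / real q)"
  unfolding w_Ex cf_def using sin_pi_q_pos by (simp add: norm_mult)

lemma w_diff2: "norm (w n x t - w n x' t) \<le> 2 * r ^ n"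
  using norm_triangle_ineq4[of "w n x t" "w n x' t"] norm_w[of n x t] norm_w[of n x' t] by linarith

lemma geo_tail_fin: "K \<le> k \<Longrightarrow> (\<Sum>n\<in>{K..<k}. r ^ n) \<le> r ^ K / (1 - r)"
proof -
  assume Kk: "K \<le> k"
  have c: "(\<Sum>n<K. r ^ n) + (\<Sum>n\<in>{K..<k}. r ^ n) = (\<Sum>n<k. r ^ n)"
    using sum.atLeastLessThan_concat[of 0 K k "\<lambda>n. r ^ n"] Kk by (simp add: atLeast0LessThan)
  have r1: "r \<noteq> 1" using r_lt1 by simp
  have a: "(\<Sum>n<k. r ^ n) = (r ^ k - 1) / (r - 1)" by (rule geometric_sum[OF r1])
  have b: "(\<Sum>n<K. r ^ n) = (r ^ K - 1) / (r - 1)" by (rule geometric_sum[OF r1])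
  have "(\<Sum>n\<in>{K..<k}. r ^ n) = (r ^ k - 1) / (r - 1) - (r ^ K - 1) / (r - 1)" using a b c by linarith
  also have "\<dots> = (r ^ k - r ^ K) / (r - 1)" by (simp add: diff_divide_distrib[symmetric])
  also have "\<dots> = (r ^ K - r ^ k) / (1 - r)" using minus_divide_divide[of "r ^ K - r ^ k" "1 - r"] by simp
  also have "\<dots> \<le> r ^ K / (1 - r)" using r_lt1 r_pos by (simp add: divide_right_mono)
  finally show ?thesis .
qed

lemma L_near:
  assumes Kk: "K \<le> k" and xd: "\<bar>x - x'\<bar> \<le> \<eta>"
  shows "norm (L k x t - L k x' t) \<le> \<eta> * (\<Sum>n<K. (r * real q) ^ n) + 2 * (r ^ K / (1 - r))"
proof -
  have "norm (L k x t - L k x' t) = norm (\<Sum>n<k. w n x t - w n x' t)" unfolding L_def by (simp add: sum_subtractf)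
  also have "\<dots> \<le> (\<Sum>n<k. norm (w n x t - w n x' t))" by (rule norm_sum)
  also have "\<dots> = (\<Sum>n<K. norm (w n x t - w n x' t)) + (\<Sum>n\<in>{K..<k}. norm (w n x t - w n x' t))"
    using sum.atLeastLessThan_concat[of 0 K k "\<lambda>n. norm (w n x t - w n x' t)"] Kk by (simp add: atLeast0LessThan)
  also have "\<dots> \<le> (\<Sum>n<K. \<eta> * (r * real q) ^ n) + (\<Sum>n\<in>{K..<k}. 2 * r ^ n)"
  proof (intro add_mono sum_mono)
    fix n
    have "norm (w n x t - w n x' t) \<le> r ^ n * real q ^ n * \<bar>x - x'\<bar>" by (rule w_lip_x)
    also have "\<dots> \<le> r ^ n * real q ^ n * \<eta>" using xd r_pos qpos by (intro mult_left_mono) auto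
    finally show "norm (w n x t - w n x' t) \<le> \<eta> * (r * real q) ^ n" by (simp add: power_mult_distrib mult_ac)
  qed (rule w_diff2)
  also have "\<dots> = \<eta> * (\<Sum>n<K. (r * real q) ^ n) + 2 * (\<Sum>n\<in>{K..<k}. r ^ n)"
    by (simp add: sum_distrib_left)
  also have "\<dots> \<le> \<eta> * (\<Sum>n<K. (r * real q) ^ n) + 2 * (r ^ K / (1 - r))"
    using geo_tail_fin[OF Kk] by simp
  finally show ?thesis .
qed

lemma L_lower:
  "\<exists>\<eta> c1 K1. 0 < \<eta> \<and> \<eta> \<le> pi / (2 * real q) \<and> 0 < c1 \<and> 1 \<le> K1 \<and>
     (\<forall>k\<ge>K1. \<forall>x t. \<bar>x - pi / real q\<bar> \<le> \<eta> \<longrightarrow> c1 \<le> norm (L k x t))"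
proof -
  define \<sigma> where "\<sigma> = sin (pi / real q)"
  have \<sigma>: "\<sigma> > 0" unfolding \<sigma>_def by (rule sin_pi_q_pos)
  obtain K0 where K0: "\<forall>n\<ge>K0. r ^ n < \<sigma> * (1 - r) / 8"
    using ev_pow_small[of r "\<sigma> * (1 - r) / 8"] r_pos r_lt1 \<sigma> by auto
  define K1 where "K1 = max K0 1"
  define SS where "SS = (\<Sum>n<K1. (r * real q) ^ n)"
  have SS0: "SS \<ge> 0" unfolding SS_def using r_pos qpos by (intro sum_nonneg) auto
  define \<eta> where "\<eta> = min (pi / (2 * real q)) (\<sigma> / (4 * (SS + 1)))"
  have \<eta>0: "\<eta> > 0" unfolding \<eta>_def using \<sigma> SS0 qpos by simp
  have \<eta>SS: "\<eta> * SS \<le> \<sigma> / 4"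
  proof -
    have "\<eta> * SS \<le> \<sigma> / (4 * (SS + 1)) * SS" unfolding \<eta>_def using SS0 by (intro mult_right_mono) auto
    also have "\<dots> \<le> \<sigma> / 4" using SS0 \<sigma> by (simp add: field_simps)
    finally show ?thesis .
  qed
  have tailK: "2 * (r ^ K1 / (1 - r)) \<le> \<sigma> / 4"
  proof -
    have "r ^ K1 < \<sigma> * (1 - r) / 8" using K0 unfolding K1_def by auto
    then show ?thesis using r_lt1 by (simp add: field_simps)
  qed
  have main: "\<sigma> / 2 \<le> norm (L k x t)" if k: "k \<ge> K1" and x: "\<bar>x - pi / real q\<bar> \<le> \<eta>" for k x t
  proof -
    have k1: "k \<ge> 1" using k unfolding K1_def by simp
    have "norm (L k x t - L k (pi / real q) t) \<le> \<eta> * SS + 2 * (r ^ K1 / (1 - r))"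
      unfolding SS_def by (rule L_near[OF k x])
    also have "\<dots> \<le> \<sigma> / 2" using \<eta>SS tailK by linarith
    finally have d: "norm (L k x t - L k (pi / real q) t) \<le> \<sigma> / 2" .
    have "norm (L k (pi / real q) t) = \<sigma>" unfolding L_x0[OF k1] norm_w0_x0 \<sigma>_def ..
    then have "\<sigma> / 2 \<le> norm (L k x t)"
      using d norm_triangle_ineq2[of "L k (pi / real q) t" "L k x t"] by (simp add: norm_minus_commute)
    then show ?thesis .
  qed
  have "\<eta> \<le> pi / (2 * real q)" unfolding \<eta>_def by simp
  moreover have "1 \<le> K1" unfolding K1_def by simp
  ultimately show ?thesis using main \<eta>0 \<sigma> by (intro exI[of _ \<eta>] exI[of _ "\<sigma> / 2"] exI[of _ K1]) auto
qed

definition Zq where "Zq = 2 * sin (pi / real q)"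

lemma Zq_pos: "Zq > 0" unfolding Zq_def using sin_pi_q_pos by simp

lemma Zq_le2: "Zq \<le> 2" unfolding Zq_def by simp

lemma Z_eq:
  assumes h: "h = 2 * pi / (real q * lam ^ k)"
  shows "norm (Ei (lam ^ k) h - 1) = Zq"
proof -
  have "lam ^ k * h = 2 * pi / real q" unfolding h using lam_pos qpos by (simp add: field_simps)
  then have "Ei (lam ^ k) h = exp (\<i> * of_real (2 * pi / real q))" unfolding Ei_def by simp
  then have "norm (Ei (lam ^ k) h - 1) = 2 * \<bar>sin ((2 * pi / real q) / 2)\<bar>" by (simp only: dist_exp_i_1)
  also have "(2 * pi / real q) / 2 = pi / real q" by simp
  finally show ?thesis unfolding Zq_def using sin_pi_q_pos by simp
qed

lemma Zq_big: "Zq * real q ^ 3 > 2 * pi"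
proof -
  define y where "y = pi / real q"
  have y0: "y > 0" unfolding y_def using qpos by simp
  have y2: "y \<le> pi / 2" unfolding y_def using qpos by (simp add: field_simps)
  then have "y < 2" using pi_less_4 by simp
  then have "y ^ 2 < 4" using y0 by (simp add: power_strict_mono[of y 2 2, simplified])
  then have "y ^ 3 / 6 < 2 * y / 3" using y0 by (simp add: power3_eq_cube power2_eq_square field_simps)
  then have s: "sin y > y / 3" using sin_lower_cubic[of y] y0 by linarith
  have q4: "real q ^ 2 \<ge> 4" using lam_ge4 unfolding lam_def .
  have sp: "sin y > 0" unfolding y_def by (rule sin_pi_q_pos)
  have "sin y * real q ^ 2 \<ge> sin y * 4" using q4 sp by (intro mult_left_mono) auto
  then have a: "sin y * real q ^ 2 > y" using s y0 by linarith
  have "2 * y * real q < 2 * (sin y * real q ^ 2) * real q" using a qpos by simp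
  moreover have "2 * y * real q = 2 * pi" unfolding y_def using qpos by simp
  moreover have "2 * (sin y * real q ^ 2) * real q = Zq * real q ^ 3" unfolding Zq_def y_def
    by (simp add: power3_eq_cube power2_eq_square)
  ultimately show ?thesis by simp
qed

lemma choose_M:
  assumes c1: "c1 > 0"
  shows "\<exists>M\<ge>1. r * lam ^ M \<ge> 2 \<and> 2 / (1 - r) * ((2 * pi / real q) ^ M / (r * lam ^ M - 1)) \<le> Zq ^ M * c1 / 8"
proof -
  define \<rho> where "\<rho> = (2 * pi / real q) / (lam * Zq)"
  have lZ: "lam * Zq > 0" using lam_pos Zq_pos by simp
  have \<rho>0: "\<rho> > 0" unfolding \<rho>_def using lZ qpos by simp
  have \<rho>1: "\<rho> < 1"
  proof -
    have "lam * Zq * real q = Zq * real q ^ 3" unfolding lam_def by (simp add: power3_eq_cube power2_eq_square)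
    then have "2 * pi < lam * Zq * real q" using Zq_big by linarith
    then have "2 * pi / real q < lam * Zq" using qpos by (simp add: field_simps)
    then show ?thesis unfolding \<rho>_def using lZ by (simp only: divide_less_eq_1_pos)
  qed
  have eps: "c1 * r * (1 - r) / 32 > 0" using c1 r_pos r_lt1 by simp
  obtain M1 where M1: "\<forall>n\<ge>M1. \<rho> ^ n < c1 * r * (1 - r) / 32"
    using ev_pow_small[OF _ \<rho>1 eps] \<rho>0 by auto
  have lam1: "lam > 1" using lam_ge4 by simp
  obtain M2 where M2: "\<forall>n\<ge>M2. 2 / r < lam ^ n" using ev_pow_large[OF lam1] by blast
  define M where "M = max (max M1 M2) 1"
  have M1': "\<rho> ^ M < c1 * r * (1 - r) / 32" using M1 unfolding M_def by auto
  have "2 / r < lam ^ M" using M2 unfolding M_def by auto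
  then have A: "r * lam ^ M > 2" using r_pos by (simp add: field_simps)
  have e: "(2 * pi / real q) ^ M = \<rho> ^ M * Zq ^ M * lam ^ M"
  proof -
    have "2 * pi / real q = \<rho> * Zq * lam" unfolding \<rho>_def using lam_pos Zq_pos qpos by (simp add: field_simps)
    then show ?thesis by (simp add: power_mult_distrib)
  qed
  have l: "lam ^ M / (r * lam ^ M - 1) \<le> 2 / r"
  proof -
    have "lam ^ M * r \<le> 2 * (r * lam ^ M - 1)" using A by (simp add: algebra_simps)
    then show ?thesis using A r_pos by (simp add: field_simps)
  qed
  have "2 / (1 - r) * ((2 * pi / real q) ^ M / (r * lam ^ M - 1)) = 2 / (1 - r) * (\<rho> ^ M * Zq ^ M) * (lam ^ M / (r * lam ^ M - 1))"
    unfolding e by (simp add: field_simps)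
  also have "\<dots> \<le> 2 / (1 - r) * (\<rho> ^ M * Zq ^ M) * (2 / r)"
    using l r_lt1 \<rho>0 Zq_pos by (intro mult_left_mono) auto
  also have "\<dots> \<le> 2 / (1 - r) * ((c1 * r * (1 - r) / 32) * Zq ^ M) * (2 / r)"
    using M1' r_lt1 r_pos Zq_pos by (intro mult_right_mono mult_left_mono) auto
  also have "\<dots> = Zq ^ M * c1 / 8" using r_lt1 r_pos by (simp add: field_simps)
  finally show ?thesis using A unfolding M_def by (intro exI[of _ "max (max M1 M2) 1"]) auto
qed

lemma S_bound:
  assumes h: "h = 2 * pi / (real q * lam ^ k)" and A: "r * lam ^ M > 1"
  shows "(\<Sum>n<k. r ^ n * (lam ^ n * \<bar>h\<bar>) ^ M) \<le> r ^ k * ((2 * pi / real q) ^ M / (r * lam ^ M - 1))"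
proof -
  have hpos: "h > 0" unfolding h using lam_pos qpos by simp
  have "(\<Sum>n<k. r ^ n * (lam ^ n * \<bar>h\<bar>) ^ M) = h ^ M * (\<Sum>n<k. (r * lam ^ M) ^ n)"
    using hpos by (simp add: sum_distrib_left power_mult_distrib power_mult[symmetric] mult.commute mult.left_commute)
  also have "\<dots> \<le> h ^ M * ((r * lam ^ M) ^ k / (r * lam ^ M - 1))"
    using hpos by (intro mult_left_mono geom_partial_le A) auto
  also have "h ^ M * (r * lam ^ M) ^ k = r ^ k * (lam ^ k * h) ^ M"
    by (simp add: power_mult_distrib power_mult[symmetric] mult.commute mult.left_commute)
  then have "h ^ M * ((r * lam ^ M) ^ k / (r * lam ^ M - 1)) = r ^ k * (lam ^ k * h) ^ M / (r * lam ^ M - 1)"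
    by (simp add: field_simps)
  also have "lam ^ k * h = 2 * pi / real q" unfolding h using lam_pos qpos by (simp add: field_simps)
  finally show ?thesis by simp
qed

lemma Lip_eq: "Lip k = r ^ k * lam ^ k / (r * lam - 1)"
  unfolding Lip_def by (simp add: power_mult_distrib)

lemma osc_final:
  assumes M: "M \<ge> 1" and rlM: "r * lam ^ M \<ge> 2" and c1: "c1 > 0"
    and C3: "2 / (1 - r) * ((2 * pi / real q) ^ M / (r * lam ^ M - 1)) \<le> Zq ^ M * c1 / 8"
    and sk: "\<bar>sin (real q ^ k * x)\<bar> \<ge> 1 / 2" and Lt0: "norm (L k x t0) \<ge> c1"
    and K12: "r ^ k * ((Zq ^ M * (pi / 2) + 2 ^ M * (real M * (2 * pi / real q))) / (r * lam - 1)) \<le> Zq ^ M * c1 / 8"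
    and K45: "r ^ k * (2 * r / (1 - r) * ((2 * pi / real q) ^ M / (r * lam ^ M - 1) + 2 ^ M)) \<le> Zq ^ M * c1 / 8"
    and h: "h = 2 * pi / (real q * lam ^ k)"
  shows "\<exists>t\<in>{t0, t0 + pi / (2 * lam ^ k)}. norm (Dop M h (\<lambda>u. F x u * cnj (F x u)) t) \<ge> r ^ k * (Zq ^ M * c1 / 8)"
proof -
  define C3' where "C3' = (2 * pi / real q) ^ M / (r * lam ^ M - 1)"
  define C12 where "C12 = (Zq ^ M * (pi / 2) + 2 ^ M * (real M * (2 * pi / real q))) / (r * lam - 1)"
  define S where "S = (\<Sum>n<k. r ^ n * (lam ^ n * \<bar>h\<bar>) ^ M)"
  define B where "B = Zq ^ M * norm (L k x t0) / 2 - Zq ^ M * (Lip k * (pi / (2 * lam ^ k))) - 2 ^ M * (Lip k * (real M * h))"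
  define T where "T = r ^ Suc k / (1 - r)"
  obtain t where t: "t \<in> {t0, t0 + pi / (2 * lam ^ k)}" and Dt:
    "norm (Dop M h (\<lambda>u. F x u * cnj (F x u)) t) \<ge> 2 * \<bar>cf k x\<bar> * B - 2 / (1 - r) * S - 2 * T * S - 2 * T * (r ^ k * 2 ^ M)"
    using osc_k[OF M h, of t0 x] unfolding Z_eq[OF h] B_def S_def T_def by blast
  have rl1: "r * lam - 1 > 0" using rlam_gt1 by simp
  have lk: "lam ^ k > 0" using lam_pos by simp
  have hpos: "h > 0" unfolding h using lk qpos by simp
  have a: "Lip k * (pi / (2 * lam ^ k)) = r ^ k * ((pi / 2) / (r * lam - 1))"
    unfolding Lip_eq using lk rl1 lam_pos r_pos by (simp add: field_simps)
  have b: "Lip k * (real M * h) = r ^ k * (real M * (2 * pi / real q) / (r * lam - 1))"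
    unfolding Lip_eq h using lk rl1 qpos lam_pos r_pos by (simp add: field_simps)
  have "Zq ^ M * (Lip k * (pi / (2 * lam ^ k))) + 2 ^ M * (Lip k * (real M * h)) = r ^ k * C12"
  proof -
    have gen: "\<And>X Y c p q d::real. X * (c * (p / d)) + Y * (c * (q / d)) = c * ((X * p + Y * q) / d)"
      by (simp add: add_divide_distrib ring_distribs mult_ac)
    show ?thesis unfolding a b C12_def by (rule gen)
  qed
  then have B1: "B \<ge> Zq ^ M * c1 / 2 - r ^ k * C12"
    unfolding B_def using Lt0 Zq_pos by (smt (verit) divide_right_mono mult_left_mono zero_le_power)
  have B0: "B \<ge> Zq ^ M * c1 * (3 / 8)" using B1 K12 unfolding C12_def by linarith
  moreover have "Zq ^ M * c1 * (3 / 8) \<ge> 0" using Zq_pos c1 by simp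
  ultimately have Bnn: "B \<ge> 0" by linarith
  have cf: "\<bar>cf k x\<bar> \<ge> r ^ k / 2"
  proof -
    have "\<bar>cf k x\<bar> = r ^ k * \<bar>sin (real q ^ k * x)\<bar>" unfolding cf_def using r_pos by (simp add: abs_mult)
    also have "\<dots> \<ge> r ^ k * (1 / 2)" using sk r_pos by (intro mult_left_mono) auto
    finally show ?thesis by simp
  qed
  have m1: "2 * \<bar>cf k x\<bar> * B \<ge> r ^ k * (Zq ^ M * c1 * (3 / 8))"
  proof -
    have "2 * \<bar>cf k x\<bar> * B \<ge> r ^ k * B" using cf Bnn by (simp add: mult_right_mono)
    moreover have "r ^ k * B \<ge> r ^ k * (Zq ^ M * c1 * (3 / 8))" using B0 r_pos by (intro mult_left_mono) auto
    ultimately show ?thesis by linarith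
  qed
  have A1: "r * lam ^ M > 1" using rlM by simp
  have S: "S \<le> r ^ k * C3'" unfolding S_def C3'_def by (rule S_bound[OF h A1])
  have S0: "S \<ge> 0" unfolding S_def using r_pos lam_pos by (intro sum_nonneg) auto
  have e1: "2 / (1 - r) * S \<le> r ^ k * (Zq ^ M * c1 / 8)"
  proof -
    have "2 / (1 - r) * S \<le> 2 / (1 - r) * (r ^ k * C3')" using S r_lt1 by (intro mult_left_mono) auto
    also have "\<dots> = r ^ k * (2 / (1 - r) * C3')" by simp
    also have "\<dots> \<le> r ^ k * (Zq ^ M * c1 / 8)" using C3 r_pos unfolding C3'_def by (intro mult_left_mono) auto
    finally show ?thesis .
  qed
  have e2: "2 * T * S + 2 * T * (r ^ k * 2 ^ M) \<le> r ^ k * (Zq ^ M * c1 / 8)"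
  proof -
    have T0: "T \<ge> 0" unfolding T_def using r_pos r_lt1 by simp
    have "2 * T * S + 2 * T * (r ^ k * 2 ^ M) = 2 * T * (S + r ^ k * 2 ^ M)" by (simp add: algebra_simps)
    also have "\<dots> \<le> 2 * T * (r ^ k * C3' + r ^ k * 2 ^ M)" using S T0 by (intro mult_left_mono) auto
    also have "\<dots> = r ^ k * (r ^ k * (2 * r / (1 - r) * (C3' + 2 ^ M)))"
      unfolding T_def using r_lt1 by (simp add: field_simps)
    also have "\<dots> \<le> r ^ k * (Zq ^ M * c1 / 8)" using K45 r_pos unfolding C3'_def by (intro mult_left_mono) auto
    finally show ?thesis .
  qed
  have "norm (Dop M h (\<lambda>u. F x u * cnj (F x u)) t) \<ge> r ^ k * (Zq ^ M * c1 / 8)"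
  proof -
    have "r ^ k * (Zq ^ M * c1 * (3 / 8)) = 3 * (r ^ k * (Zq ^ M * c1 / 8))" by simp
    then show ?thesis using Dt m1 e1 e2 by linarith
  qed
  then show ?thesis using t by blast
qed

lemma Nc_pos: "norm_const q s > 0"
proof -
  have "real q powr (2 * (s - 2)) < real q powr 0" using q2 s2 by (intro powr_less_mono) auto
  then have "real q powr (2 * (s - 2)) < 1" using q2 by simp
  then show ?thesis unfolding norm_const_def by simp
qed

lemma g_real: "F x u * cnj (F x u) = complex_of_real ((norm (F x u))^2)"
  by (rule complex_norm_square[symmetric])

lemma osc_lower:
  "\<exists>\<eta> c W K. 0 < \<eta> \<and> \<eta> \<le> pi / (2 * real q) \<and> 0 < c \<and> 0 < W \<and>
    (\<forall>k\<ge>K. \<forall>x. \<bar>x - pi / real q\<bar> \<le> \<eta> \<longrightarrow> \<bar>sin (real q ^ k * x)\<bar> \<ge> 1 / 2 \<longrightarrow>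
      (\<forall>t0. \<exists>t1 t2. t1 \<in> {t0..t0 + W / lam ^ k} \<and> t2 \<in> {t0..t0 + W / lam ^ k} \<and>
          \<bar>Prob q s x t1 - Prob q s x t2\<bar> \<ge> c * r ^ k))"
proof -
  obtain \<eta> c1 K1 where \<eta>: "0 < \<eta>" "\<eta> \<le> pi / (2 * real q)" and c1: "0 < c1" and K1: "1 \<le> K1"
    and Llow: "\<And>k x t. k \<ge> K1 \<Longrightarrow> \<bar>x - pi / real q\<bar> \<le> \<eta> \<Longrightarrow> c1 \<le> norm (L k x t)"
    using L_lower by blast
  obtain M where M: "M \<ge> 1" and rlM: "r * lam ^ M \<ge> 2"
    and C3: "2 / (1 - r) * ((2 * pi / real q) ^ M / (r * lam ^ M - 1)) \<le> Zq ^ M * c1 / 8"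
    using choose_M[OF c1] by blast
  define C12 where "C12 = (Zq ^ M * (pi / 2) + 2 ^ M * (real M * (2 * pi / real q))) / (r * lam - 1)"
  define C45 where "C45 = 2 * r / (1 - r) * ((2 * pi / real q) ^ M / (r * lam ^ M - 1) + 2 ^ M)"
  define Y where "Y = Zq ^ M * c1 / 8"
  have Y0: "Y > 0" unfolding Y_def using Zq_pos c1 by simp
  have rl1: "r * lam - 1 > 0" using rlam_gt1 by simp
  have C12p: "C12 > 0" unfolding C12_def using Zq_pos rl1 qpos by (intro divide_pos_pos add_pos_nonneg) auto
  have rlM1: "r * lam ^ M - 1 > 0" using rlM by simp
  have C45p: "C45 > 0" unfolding C45_def using r_pos r_lt1 rlM1 qpos by (intro mult_pos_pos add_nonneg_pos) auto
  obtain K2 where K2: "\<forall>n\<ge>K2. r ^ n < Y / C12" using ev_pow_small[of r "Y / C12"] r_pos r_lt1 Y0 C12p by auto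
  obtain K3 where K3: "\<forall>n\<ge>K3. r ^ n < Y / C45" using ev_pow_small[of r "Y / C45"] r_pos r_lt1 Y0 C45p by auto
  define K where "K = max K1 (max K2 K3)"
  define c where "c = (norm_const q s)^2 * (Y / 2 ^ M)"
  define W where "W = pi / 2 + real M * (2 * pi / real q)"
  have c0: "c > 0" unfolding c_def using Nc_pos Y0 by simp
  have W0: "W > 0" unfolding W_def using qpos by (simp add: add_pos_nonneg)
  have main: "\<exists>t1 t2. t1 \<in> {t0..t0 + W / lam ^ k} \<and> t2 \<in> {t0..t0 + W / lam ^ k} \<and>
          \<bar>Prob q s x t1 - Prob q s x t2\<bar> \<ge> c * r ^ k"
    if k: "k \<ge> K" and x: "\<bar>x - pi / real q\<bar> \<le> \<eta>" and sk: "\<bar>sin (real q ^ k * x)\<bar> \<ge> 1 / 2" for k x t0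
  proof -
    define h where "h = 2 * pi / (real q * lam ^ k)"
    have lk: "lam ^ k > 0" using lam_pos by simp
    have hpos: "h > 0" unfolding h_def using lk qpos by simp
    have Lt0: "norm (L k x t0) \<ge> c1" using Llow[OF _ x] k unfolding K_def by auto
    have k12: "r ^ k * C12 \<le> Y"
    proof -
      have "r ^ k < Y / C12" using K2 k unfolding K_def by auto
      then show ?thesis using C12p by (simp add: field_simps)
    qed
    have k45: "r ^ k * C45 \<le> Y"
    proof -
      have "r ^ k < Y / C45" using K3 k unfolding K_def by auto
      then show ?thesis using C45p by (simp add: field_simps)
    qed
    obtain t where t: "t \<in> {t0, t0 + pi / (2 * lam ^ k)}"
      and Dt: "norm (Dop M h (\<lambda>u. F x u * cnj (F x u)) t) \<ge> r ^ k * Y"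
      using osc_final[OF M rlM c1 C3 sk Lt0 _ _ h_def] k12 k45 unfolding C12_def C45_def Y_def by blast
    have "norm (Dop M h (\<lambda>u. F x u * cnj (F x u)) t) \<ge> 2 ^ M * (r ^ k * Y / 2 ^ M)" using Dt by simp
    then obtain j where j: "j \<le> M" and big: "norm (F x (t + real j * h) * cnj (F x (t + real j * h)) - F x t * cnj (F x t)) \<ge> r ^ k * Y / 2 ^ M"
      using Dop_big_step[OF M] by blast
    have "norm (F x (t + real j * h) * cnj (F x (t + real j * h)) - F x t * cnj (F x t))
        = \<bar>(norm (F x (t + real j * h)))^2 - (norm (F x t))^2\<bar>"
      unfolding g_real by (simp only: of_real_diff[symmetric] norm_of_real)
    then have big2: "\<bar>(norm (F x (t + real j * h)))^2 - (norm (F x t))^2\<bar> \<ge> r ^ k * Y / 2 ^ M" using big by simp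
    have "\<bar>Prob q s x (t + real j * h) - Prob q s x t\<bar> = (norm_const q s)^2 * \<bar>(norm (F x (t + real j * h)))^2 - (norm (F x t))^2\<bar>"
      unfolding Prob_eq by (simp add: abs_mult flip: right_diff_distrib)
    also have "\<dots> \<ge> (norm_const q s)^2 * (r ^ k * Y / 2 ^ M)" using big2 by (intro mult_left_mono) auto
    finally have P: "\<bar>Prob q s x (t + real j * h) - Prob q s x t\<bar> \<ge> c * r ^ k" unfolding c_def by (simp add: mult_ac)
    have Wk: "W / lam ^ k = pi / (2 * lam ^ k) + real M * h"
    proof -
      have "lam ^ k \<noteq> 0" "real q \<noteq> 0" using lam_pos qpos by auto
      then show ?thesis unfolding W_def h_def by (simp add: field_simps)
    qed
    have "t0 \<le> t" "t \<le> t0 + pi / (2 * lam ^ k)" using t lk by auto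
    moreover have "0 \<le> real j * h" "real j * h \<le> real M * h" using j hpos by (auto intro: mult_right_mono)
    ultimately have "t \<in> {t0..t0 + W / lam ^ k}" "t + real j * h \<in> {t0..t0 + W / lam ^ k}"
      unfolding Wk using lk by auto
    then show ?thesis using P by blast
  qed
  show ?thesis using \<eta> c0 W0 main by (intro exI[of _ \<eta>] exI[of _ c] exI[of _ W] exI[of _ K]) auto
qed

end

lemma pow_bracket:
  fixes x y :: real assumes x: "x > 1" and y: "y \<ge> 1"
  shows "\<exists>K. x ^ K \<le> y \<and> y < x ^ Suc K"
proof -
  obtain n where n: "y < x ^ n" using real_arch_pow[OF x] by blast
  define m where "m = (LEAST n. y < x ^ n)"
  have m: "y < x ^ m" unfolding m_def using n by (rule LeastI)
  have m0: "m \<noteq> 0" using m y by (cases m) auto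
  have "\<not> y < x ^ (m - 1)" unfolding m_def by (rule not_less_Least) (use m0 m_def in simp)
  then have "x ^ (m - 1) \<le> y" by simp
  moreover have "Suc (m - 1) = m" using m0 by simp
  ultimately show ?thesis using m by (intro exI[of _ "m - 1"]) simp
qed

context wf begin

lemma rpow_lam: "r ^ K = (lam ^ K) powr (-(1 - s/2))"
proof -
  have l: "lam = real q powr 2" unfolding lam_def using qpos by simp
  have "(lam ^ K) powr (-(1 - s/2)) = (lam powr real K) powr (-(1 - s/2))" using lam_pos by (simp add: powr_realpow)
  also have "\<dots> = lam powr (real K * (-(1 - s/2)))" by (simp only: powr_powr)
  also have "\<dots> = (real q powr 2) powr (real K * (-(1 - s/2)))" by (simp only: l)
  also have "\<dots> = real q powr (2 * (real K * (-(1 - s/2))))" by (simp only: powr_powr)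
  also have "2 * (real K * (-(1 - s/2))) = real K * (s - 2)" by (simp add: algebra_simps)
  finally show ?thesis using rpow[of K] by simp
qed

lemma rlam_pow: "(r * lam) ^ K = (lam ^ K) powr (s/2)"
proof -
  have "(r * lam) ^ K = r ^ K * lam ^ K" by (simp add: power_mult_distrib)
  also have "\<dots> = (lam ^ K) powr (-(1 - s/2)) * (lam ^ K) powr 1"
  proof -
    have "(lam ^ K) powr 1 = lam ^ K" using lam_pos by (intro powr_one) simp
    then show ?thesis unfolding rpow_lam by simp
  qed
  also have "\<dots> = (lam ^ K) powr (-(1 - s/2) + 1)" by (simp only: powr_add)
  also have "-(1 - s/2) + 1 = s/2" by simp
  finally show ?thesis .
qed

lemma L_lip_x: "norm (L k x t - L k x' t) \<le> Lip k * \<bar>x - x'\<bar>"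
proof -
  have "norm (L k x t - L k x' t) = norm (\<Sum>n<k. w n x t - w n x' t)" unfolding L_def by (simp add: sum_subtractf)
  also have "\<dots> \<le> (\<Sum>n<k. norm (w n x t - w n x' t))" by (rule norm_sum)
  also have "\<dots> \<le> (\<Sum>n<k. (r * lam) ^ n * \<bar>x - x'\<bar>)"
  proof (rule sum_mono)
    fix n
    have "real q ^ n \<le> lam ^ n" unfolding lam_def using qpos
      by (intro power_mono) (auto simp: power2_eq_square)
    then have "r ^ n * real q ^ n * \<bar>x - x'\<bar> \<le> r ^ n * lam ^ n * \<bar>x - x'\<bar>"
      using r_pos by (intro mult_right_mono mult_left_mono) auto
    then show "norm (w n x t - w n x' t) \<le> (r * lam) ^ n * \<bar>x - x'\<bar>"
      using w_lip_x[of n x t x'] by (simp add: power_mult_distrib)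
  qed
  also have "\<dots> = (\<Sum>n<k. (r * lam) ^ n) * \<bar>x - x'\<bar>" by (simp add: sum_distrib_right)
  also have "\<dots> \<le> Lip k * \<bar>x - x'\<bar>"
    unfolding Lip_def by (rule mult_right_mono[OF geom_partial_le[OF rlam_gt1]]) simp
  finally show ?thesis .
qed

lemma osc_upper:
  "\<exists>Cu>0. \<forall>\<delta> x t x' t'. 0 < \<delta> \<longrightarrow> \<delta> \<le> 1 \<longrightarrow> \<bar>x - x'\<bar> \<le> \<delta> \<longrightarrow> \<bar>t - t'\<bar> \<le> \<delta> \<longrightarrow>
      \<bar>Prob q s x t - Prob q s x' t'\<bar> \<le> Cu * \<delta> powr (1 - s/2)"
proof -
  define C0 where "C0 = 2 / (r * lam - 1) + 2 / (1 - r)"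
  define Cu where "Cu = (norm_const q s)^2 * (2 / (1 - r)) * C0 * lam powr (1 - s/2)"
  have rl1: "r * lam - 1 > 0" using rlam_gt1 by simp
  have C00: "C0 > 0" unfolding C0_def using rl1 r_lt1 by (intro add_pos_pos divide_pos_pos) auto
  have Cu0: "Cu > 0" unfolding Cu_def using Nc_pos C00 r_lt1 lam_pos by simp
  have "\<bar>Prob q s x t - Prob q s x' t'\<bar> \<le> Cu * \<delta> powr (1 - s/2)"
    if \<delta>: "0 < \<delta>" "\<delta> \<le> 1" and dx: "\<bar>x - x'\<bar> \<le> \<delta>" and dt: "\<bar>t - t'\<bar> \<le> \<delta>" for \<delta> x t x' t'
  proof -
    have "1 / \<delta> \<ge> 1" using \<delta> by simp
    then obtain K where K1: "lam ^ K \<le> 1 / \<delta>" and K2: "1 / \<delta> < lam ^ Suc K"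
      using pow_bracket[of lam "1/\<delta>"] lam_ge4 by auto
    have lK: "lam ^ K > 0" using lam_pos by simp
    have Kd: "lam ^ K * \<delta> \<le> 1" using K1 \<delta> by (simp add: field_simps)
    have LipK: "Lip K * \<delta> \<le> r ^ K / (r * lam - 1)"
    proof -
      have "Lip K * \<delta> = r ^ K * (lam ^ K * \<delta>) / (r * lam - 1)" unfolding Lip_eq by simp
      also have "\<dots> \<le> r ^ K * 1 / (r * lam - 1)" using Kd r_pos rl1 by (intro divide_right_mono mult_left_mono) auto
      finally show ?thesis by simp
    qed
    have "norm (L K x t - L K x' t') \<le> norm (L K x t - L K x t') + norm (L K x t' - L K x' t')"
      by (rule norm_diff_triangle_le[OF order_refl order_refl])
    also have "\<dots> \<le> Lip K * \<delta> + Lip K * \<delta>"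
    proof (rule add_mono)
      show "norm (L K x t - L K x t') \<le> Lip K * \<delta>"
        using L_lip[of K x t t'] dt Lip_nonneg unfolding Lip_def[symmetric] by (meson mult_left_mono order_trans)
      show "norm (L K x t' - L K x' t') \<le> Lip K * \<delta>"
        using L_lip_x[of K x t' x'] dx Lip_nonneg by (meson mult_left_mono order_trans)
    qed
    finally have dL: "norm (L K x t - L K x' t') \<le> 2 * (r ^ K / (r * lam - 1))" using LipK by linarith
    have FF: "F x t - F x' t' = (L K x t - L K x' t') + ((\<Sum>n. w (n + K) x t) - (\<Sum>n. w (n + K) x' t'))"
      using F_split[of x t K] F_split[of x' t' K] unfolding L_def by simp
    have "norm (F x t - F x' t') \<le> norm (L K x t - L K x' t') + (norm (\<Sum>n. w (n + K) x t) + norm (\<Sum>n. w (n + K) x' t'))"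
      unfolding FF by (meson norm_triangle_ineq norm_triangle_ineq4 add_left_mono order_trans)
    also have "\<dots> \<le> 2 * (r ^ K / (r * lam - 1)) + (r ^ K / (1 - r) + r ^ K / (1 - r))"
      using dL tail_bound[of K x t] tail_bound[of K x' t'] by (intro add_mono) auto
    also have "\<dots> = r ^ K * C0" unfolding C0_def by (simp add: field_simps)
    finally have dF: "norm (F x t - F x' t') \<le> r ^ K * C0" .
    have "\<bar>(norm (F x t))^2 - (norm (F x' t'))^2\<bar> = \<bar>norm (F x t) - norm (F x' t')\<bar> * (norm (F x t) + norm (F x' t'))"
    proof -
      have g: "\<And>a b::real. 0 \<le> a \<Longrightarrow> 0 \<le> b \<Longrightarrow> \<bar>a^2 - b^2\<bar> = \<bar>a - b\<bar> * (a + b)"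
      proof -
        fix a b :: real assume "0 \<le> a" "0 \<le> b"
        have "a^2 - b^2 = (a - b) * (a + b)" by (simp add: power2_eq_square algebra_simps)
        then show "\<bar>a^2 - b^2\<bar> = \<bar>a - b\<bar> * (a + b)" using \<open>0 \<le> a\<close> \<open>0 \<le> b\<close> by (simp add: abs_mult)
      qed
      show ?thesis by (rule g) auto
    qed
    also have "\<dots> \<le> (r ^ K * C0) * (2 / (1 - r))"
    proof (rule mult_mono)
      show "\<bar>norm (F x t) - norm (F x' t')\<bar> \<le> r ^ K * C0" using norm_triangle_ineq3[of "F x t" "F x' t'"] dF by linarith
      show "norm (F x t) + norm (F x' t') \<le> 2 / (1 - r)" using F_bound[of x t] F_bound[of x' t'] by simp
    qed (use r_pos C00 in auto)
    finally have dP: "\<bar>(norm (F x t))^2 - (norm (F x' t'))^2\<bar> \<le> r ^ K * C0 * (2 / (1 - r))" .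
    have rK: "r ^ K \<le> lam powr (1 - s/2) * \<delta> powr (1 - s/2)"
    proof -
      have "1 / (lam * \<delta>) \<le> lam ^ K" using K2 \<delta> lam_pos by (simp add: field_simps)
      then have "(lam ^ K) powr (-(1 - s/2)) \<le> (1 / (lam * \<delta>)) powr (-(1 - s/2))"
        using \<delta> lam_pos s2 by (intro powr_mono2') auto
      also have "\<dots> = 1 / ((lam * \<delta>) powr (-(1 - s/2)))" by (simp only: powr_divide powr_one_eq_one)
      also have "\<dots> = (lam * \<delta>) powr (1 - s/2)" by (simp only: powr_minus divide_inverse inverse_inverse_eq mult_1)
      also have "\<dots> = lam powr (1 - s/2) * \<delta> powr (1 - s/2)" by (rule powr_mult)
      finally show ?thesis unfolding rpow_lam .
    qed
    have "\<bar>Prob q s x t - Prob q s x' t'\<bar> = (norm_const q s)^2 * \<bar>(norm (F x t))^2 - (norm (F x' t'))^2\<bar>"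
      unfolding Prob_eq by (simp add: abs_mult flip: right_diff_distrib)
    also have "\<dots> \<le> (norm_const q s)^2 * (r ^ K * C0 * (2 / (1 - r)))" using dP by (intro mult_left_mono) auto
    also have "\<dots> \<le> (norm_const q s)^2 * ((lam powr (1 - s/2) * \<delta> powr (1 - s/2)) * C0 * (2 / (1 - r)))"
      using rK C00 r_lt1 by (intro mult_left_mono mult_right_mono) auto
    also have "\<dots> = Cu * \<delta> powr (1 - s/2)" unfolding Cu_def by (simp add: mult_ac)
    finally show ?thesis .
  qed
  then show ?thesis using Cu0 by blast
qed

lemma Prob_cont: "continuous_on S (\<lambda>t. Prob q s x t)"
proof -
  obtain Cu where Cu: "Cu > 0" and osc: "\<And>\<delta> x t x' t'. 0 < \<delta> \<Longrightarrow> \<delta> \<le> 1 \<Longrightarrow> \<bar>x - x'\<bar> \<le> \<delta> \<Longrightarrow> \<bar>t - t'\<bar> \<le> \<delta> \<Longrightarrow>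
      \<bar>Prob q s x t - Prob q s x' t'\<bar> \<le> Cu * \<delta> powr (1 - s/2)"
    using osc_upper by blast
  define a where "a = 1 - s/2"
  have a0: "a > 0" unfolding a_def using s2 by simp
  show ?thesis unfolding continuous_on_iff
  proof (intro ballI allI impI)
    fix t e :: real assume e: "e > 0"
    define d where "d = (e / (2 * Cu)) powr (1 / a)"
    have d0: "d > 0" unfolding d_def using e Cu by simp
    have da: "d powr a = e / (2 * Cu)" unfolding d_def using a0 e Cu by (simp add: powr_powr)
    define d' where "d' = min 1 d"
    have d'0: "d' > 0" unfolding d'_def using d0 by simp
    show "\<exists>d>0. \<forall>t'\<in>S. dist t' t < d \<longrightarrow> dist (Prob q s x t') (Prob q s x t) < e"
    proof (intro exI[of _ d'] conjI ballI impI)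
      fix t' assume "dist t' t < d'"
      then have tt: "\<bar>t' - t\<bar> \<le> d'" by (simp add: dist_real_def)
      have "\<bar>Prob q s x t' - Prob q s x t\<bar> \<le> Cu * d' powr a" unfolding a_def
        using osc[OF d'0 _ _ tt, of x x] d0 unfolding d'_def by simp
      also have "\<dots> \<le> Cu * d powr a" using Cu a0 d'0 unfolding d'_def by (intro mult_left_mono powr_mono2) auto
      also have "\<dots> = e / 2" unfolding da using Cu by simp
      finally show "dist (Prob q s x t') (Prob q s x t) < e" using e by (simp add: dist_real_def)
    qed (rule d'0)
  qed
qed

lemma sin_shift_half:
  assumes "pi / 6 \<le> \<theta>" "\<theta> \<le> 5 * pi / 6"
  shows "\<bar>sin (of_int j * pi + \<theta>)\<bar> \<ge> 1 / 2"
proof -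
  have sj: "sin (of_int j * pi) = 0" using sin_npi_int[of j] by (simp add: mult.commute)
  have "cos (of_int j * pi) ^ 2 = 1" using sin_cos_squared_add[of "of_int j * pi"] sj by simp
  then have cj: "\<bar>cos (of_int j * pi)\<bar> = 1" by (auto simp: power2_eq_1_iff)
  have "sin (of_int j * pi + \<theta>) = cos (of_int j * pi) * sin \<theta>" by (simp add: sin_add sj)
  then have e: "\<bar>sin (of_int j * pi + \<theta>)\<bar> = \<bar>sin \<theta>\<bar>" using cj by (simp add: abs_mult)
  have "sin \<theta> \<ge> 1 / 2"
  proof (cases "\<theta> \<le> pi / 2")
    case True
    have "sin (pi / 6) \<le> sin \<theta>" using assms True by (intro sin_monotone_2pi_le) auto
    then show ?thesis by (simp add: sin_30)
  next
    case False
    have "sin \<theta> = sin (pi - \<theta>)" by simp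
    moreover have "sin (pi / 6) \<le> sin (pi - \<theta>)" using assms False by (intro sin_monotone_2pi_le) auto
    ultimately show ?thesis by (simp add: sin_30)
  qed
  then show ?thesis unfolding e by simp
qed

end

lemma powr_split:
  fixes \<delta> :: real assumes "\<delta> > 0"
  shows "\<delta> powr (-(2 + s/2)) = (1 / \<delta>) * (1 / \<delta>) * \<delta> powr (-(s/2))"
proof -
  have e: "-(2 + s/2) = (-1) + ((-1) + (-(s/2)))" by simp
  have "\<delta> powr (-(2 + s/2)) = \<delta> powr (-1) * (\<delta> powr (-1) * \<delta> powr (-(s/2)))"
    by (simp only: e powr_add)
  also have "\<delta> powr (-1) = 1 / \<delta>" using assms by (simp add: powr_minus_divide)
  finally show ?thesis by (simp only: mult.assoc)
qed

context wf begin

lemma upper_count: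
  assumes T: "T > 0"
  defines "G \<equiv> {(x, t, Prob q s x t) | x t. x \<in> {0..pi} \<and> t \<in> {0..T}}"
  shows "\<exists>C>0. \<exists>\<delta>0>0. \<forall>\<delta>. 0 < \<delta> \<longrightarrow> \<delta> < \<delta>0 \<longrightarrow>
     finite (cubeset G \<delta>) \<and> real (box_count G \<delta>) \<le> C * \<delta> powr (-(2 + s/2))"
proof -
  obtain Cu where Cu: "Cu > 0" and osc: "\<And>\<delta> x t x' t'. 0 < \<delta> \<Longrightarrow> \<delta> \<le> 1 \<Longrightarrow> \<bar>x - x'\<bar> \<le> \<delta> \<Longrightarrow> \<bar>t - t'\<bar> \<le> \<delta> \<Longrightarrow>
      \<bar>Prob q s x t - Prob q s x' t'\<bar> \<le> Cu * \<delta> powr (1 -(s/2))"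
    using osc_upper by blast
  define \<delta>0 where "\<delta>0 = min 1 (min (pi / 2) (T / 2))"
  define C where "C = 4 * pi * T * (2 * Cu + 5)"
  have \<delta>00: "\<delta>0 > 0" unfolding \<delta>0_def using T by simp
  have C0: "C > 0" unfolding C_def using T Cu by simp
  have "finite (cubeset G \<delta>) \<and> real (box_count G \<delta>) \<le> C * \<delta> powr (-(2 + s/2))" if \<delta>: "0 < \<delta>" "\<delta> < \<delta>0" for \<delta>
  proof -
    have d1: "\<delta> \<le> 1" "\<delta> \<le> pi / 2" "\<delta> \<le> T / 2" using \<delta> unfolding \<delta>0_def by auto
    have bu: "finite (cubeset G \<delta>) \<and> real (box_count G \<delta>) \<le> (pi/\<delta> + 2) * (T/\<delta> + 2) * (2 * (Cu * \<delta> powr (1 -(s/2))) / \<delta> + 5)"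
      unfolding G_def
      by (rule box_upper) (use \<delta> T Cu osc d1 in auto)
    have p1: "pi/\<delta> + 2 \<le> 2 * pi * (1 / \<delta>)" using d1 \<delta> by (simp add: field_simps)
    have p2: "T/\<delta> + 2 \<le> 2 * T * (1 / \<delta>)" using d1 \<delta> by (simp add: field_simps)
    have pw: "\<delta> powr (1 -(s/2)) / \<delta> = \<delta> powr (-(s/2))"
    proof -
      have e: "1 - s/2 = 1 + (-(s/2))" by simp
      have "\<delta> powr (1 - s/2) = \<delta> powr 1 * \<delta> powr (-(s/2))" by (simp only: e powr_add)
      also have "\<delta> powr 1 = \<delta>" using \<delta> by simp
      finally show ?thesis using \<delta> by simp
    qed
    have one: "1 \<le> \<delta> powr (-(s/2))"
    proof -
      have "\<delta> powr (s/2) \<le> 1 powr (s/2)" using \<delta> d1 s0 by (intro powr_mono2) auto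
      then have "\<delta> powr (s/2) \<le> 1" by simp
      moreover have "\<delta> powr (s/2) > 0" using \<delta> by simp
      ultimately show ?thesis by (simp add: powr_minus_divide field_simps)
    qed
    have p3: "2 * (Cu * \<delta> powr (1 -(s/2))) / \<delta> + 5 \<le> (2 * Cu + 5) * \<delta> powr (-(s/2))"
    proof -
      have "2 * (Cu * \<delta> powr (1 -(s/2))) / \<delta> = 2 * Cu * (\<delta> powr (1 -(s/2)) / \<delta>)" by simp
      also have "\<dots> = 2 * Cu * \<delta> powr (-(s/2))" unfolding pw ..
      finally show ?thesis using one by (simp add: algebra_simps)
    qed
    have "(pi/\<delta> + 2) * (T/\<delta> + 2) * (2 * (Cu * \<delta> powr (1 -(s/2))) / \<delta> + 5)
        \<le> (2 * pi * (1 / \<delta>)) * (2 * T * (1 / \<delta>)) * ((2 * Cu + 5) * \<delta> powr (-(s/2)))"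
    proof -
      have "0 \<le> 2 * (Cu * \<delta> powr (1 -(s/2))) / \<delta> + 5" using Cu \<delta> by (intro add_nonneg_nonneg divide_nonneg_pos) auto
      then show ?thesis using p1 p2 p3 \<delta> T by (intro mult_mono) (auto intro: add_nonneg_nonneg)
    qed
    also have "\<dots> = C * ((1 / \<delta>) * (1 / \<delta>) * \<delta> powr (-(s/2)))" unfolding C_def by (simp add: mult_ac)
    also have "\<dots> = C * \<delta> powr (-(2 + s/2))" using powr_split[OF \<delta>(1)] by simp
    finally show ?thesis using bu by simp
  qed
  then show ?thesis using C0 \<delta>00 by blast
qed

lemma lower_fixed_k:
  fixes T \<eta> c W \<delta> :: real and k :: nat
  defines "G \<equiv> {(x, t, Prob q s x t) | x t. x \<in> {0..pi} \<and> t \<in> {0..T}}"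
  assumes T: "T > 0" and \<eta>: "\<eta> > 0" "\<eta> \<le> pi / (2 * real q)" and c: "c > 0" and W: "W > 0"
    and oscL: "\<And>x t0. \<bar>x - pi / real q\<bar> \<le> \<eta> \<Longrightarrow> \<bar>sin (real q ^ k * x)\<bar> \<ge> 1 / 2 \<Longrightarrow>
        \<exists>t1 t2. t1 \<in> {t0..t0 + W / lam ^ k} \<and> t2 \<in> {t0..t0 + W / lam ^ k} \<and> \<bar>Prob q s x t1 - Prob q s x t2\<bar> \<ge> c * r ^ k"
    and \<delta>: "\<delta> > 0" "\<delta> \<le> (1/4) / lam ^ k"
    and qk: "real q ^ k \<ge> 2 * pi / \<eta>"
    and Wk: "W / lam ^ k \<le> T / 2"
    and big: "c * r ^ k / \<delta> \<ge> 2"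
    and fin: "finite (cubeset G \<delta>)"
  shows "real (box_count G \<delta>) \<ge> (\<eta> / (6 * \<delta>)) * (T / (2 * (W / lam ^ k + 2 * \<delta>))) * (c * r ^ k / (2 * \<delta>))"
proof -
  define qk where "qk = real q ^ k"
  have qk1: "qk \<ge> 1" unfolding qk_def using qpos by simp
  have lamk: "lam ^ k = qk ^ 2" unfolding qk_def lam_def by (simp add: power_mult[symmetric] mult.commute)
  have \<delta>6: "\<delta> \<le> pi / (6 * qk)"
  proof -
    have "\<delta> \<le> 1 / (4 * qk ^ 2)" using \<delta>(2) unfolding lamk by simp
    also have "\<dots> \<le> 1 / (4 * qk)" using qk1 by (simp add: power2_eq_square field_simps)
    also have "\<dots> \<le> pi / (6 * qk)" using qk1 pi_ge_two by (simp add: field_simps)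
    finally show ?thesis .
  qed
  define xp where "xp j u = (of_int j * pi + pi / 6) / qk + 2 * \<delta> * real u" for j :: int and u :: nat
  define jlo where "jlo = \<lceil>(pi / real q - \<eta>) * qk / pi\<rceil>"
  define jhi where "jhi = \<lfloor>(pi / real q + \<eta>) * qk / pi\<rfloor> - 1"
  define J where "J = {jlo..jhi}"
  define NU where "NU = nat \<lfloor>pi / (3 * qk * \<delta>)\<rfloor>"
  define U where "U = {..<NU}"
  define X where "X = (\<lambda>(j, u). xp j u) ` (J \<times> U)"
  have uU: "2 * \<delta> * real u * qk < 2 * pi / 3" if "u \<in> U" for u
  proof -
    have "real u + 1 \<le> real NU" using that unfolding U_def by simp
    also have "real NU \<le> pi / (3 * qk * \<delta>)" unfolding NU_def
      using \<delta> qk1 by (simp add: of_nat_nat)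
    finally have "real u < pi / (3 * qk * \<delta>)" by simp
    then have "real u * (3 * qk * \<delta>) < pi" using \<delta> qk1 by (simp add: field_simps)
    then show ?thesis by (simp add: field_simps)
  qed
  have xq: "qk * xp j u = of_int j * pi + (pi / 6 + 2 * \<delta> * real u * qk)" for j u
    unfolding xp_def using qk1 by (simp add: field_simps)
  have sinx: "\<bar>sin (real q ^ k * xp j u)\<bar> \<ge> 1 / 2" if "u \<in> U" for j u
  proof -
    have "0 \<le> 2 * \<delta> * real u * qk" using \<delta> qk1 by simp
    then have "pi / 6 \<le> pi / 6 + 2 * \<delta> * real u * qk" "pi / 6 + 2 * \<delta> * real u * qk \<le> 5 * pi / 6"
      using uU[OF that] by auto
    then show ?thesis using sin_shift_half xq unfolding qk_def by metis
  qed
  have xrange: "of_int j * pi / qk \<le> xp j u \<and> xp j u \<le> (of_int j + 1) * pi / qk" if "u \<in> U" for j u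
  proof -
    have "0 \<le> 2 * \<delta> * real u * qk" using \<delta> qk1 by simp
    then have a: "of_int j * pi \<le> qk * xp j u" "qk * xp j u \<le> (of_int j + 1) * pi"
      unfolding xq using uU[OF that] by (auto simp: algebra_simps)
    show ?thesis using a qk1 by (simp add: field_simps)
  qed
  have xnear: "\<bar>xp j u - pi / real q\<bar> \<le> \<eta>" if "j \<in> J" "u \<in> U" for j u
  proof -
    have j1: "(pi / real q - \<eta>) * qk / pi \<le> of_int j" using that unfolding J_def jlo_def by (auto simp: ceiling_le_iff)
    have "j + 1 \<le> \<lfloor>(pi / real q + \<eta>) * qk / pi\<rfloor>" using that unfolding J_def jhi_def by simp
    then have "of_int (j + 1) \<le> (pi / real q + \<eta>) * qk / pi" by (simp only: le_floor_iff)
    then have j2: "of_int j + 1 \<le> (pi / real q + \<eta>) * qk / pi" by simp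
    have "pi / real q - \<eta> \<le> of_int j * pi / qk" using j1 qk1 pi_gt_zero by (simp add: field_simps)
    moreover have "(of_int j + 1) * pi / qk \<le> pi / real q + \<eta>" using j2 qk1 pi_gt_zero by (simp add: field_simps)
    ultimately show ?thesis using xrange[OF that(2), of j] by auto
  qed
  have Xsub: "X \<subseteq> {0..pi}"
  proof
    fix x assume "x \<in> X"
    then obtain j u where ju: "j \<in> J" "u \<in> U" and x: "x = xp j u" unfolding X_def by auto
    have "\<bar>x - pi / real q\<bar> \<le> \<eta>" using xnear[OF ju] x by simp
    moreover have "pi / real q - \<eta> \<ge> 0"
    proof -
      have "pi / (2 * real q) \<le> pi / real q" by (rule divide_left_mono) (use qpos in auto)
      then show ?thesis using \<eta>(2) by linarith
    qed
    moreover have "pi / real q + \<eta> \<le> pi"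
    proof -
      have "pi / real q + \<eta> \<le> pi / real q + pi / (2 * real q)" using \<eta>(2) by simp
      also have "\<dots> = 3 * pi / (2 * real q)" using qpos by (simp add: field_simps)
      also have "\<dots> \<le> pi" using qpos by (simp add: field_simps)
      finally show ?thesis .
    qed
    ultimately show "x \<in> {0..pi}" by auto
  qed
  have sep_lt: "xp j' u' - xp j u \<ge> 2 * \<delta>" if "j < j'" "u \<in> U" "u' \<in> U" for j j' u u'
  proof -
    have "of_int j + 1 \<le> (of_int j' :: real)" using that by simp
    then have jj: "(of_int j + 1) * pi + pi / 6 \<le> of_int j' * pi + pi / 6" by simp
    have a1: "(of_int j' * pi + pi / 6) / qk \<le> xp j' u'" unfolding xp_def using \<delta> by simp
    have a2: "(of_int j + 1) * pi / qk + pi / (6 * qk) = ((of_int j + 1) * pi + pi / 6) / qk"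
      using qk1 by (simp add: field_simps)
    have a3: "((of_int j + 1) * pi + pi / 6) / qk \<le> (of_int j' * pi + pi / 6) / qk"
      using jj qk1 by (intro divide_right_mono) auto
    have a: "(of_int j + 1) * pi / qk + pi / (6 * qk) \<le> xp j' u'" using a1 a2 a3 by linarith
    have b: "xp j u < of_int j * pi / qk + pi / (6 * qk) + 2 * pi / (3 * qk)"
      using uU[OF that(2)] qk1 unfolding xp_def by (simp add: field_simps)
    have "(of_int j + 1) * pi / qk + pi / (6 * qk) - (of_int j * pi / qk + pi / (6 * qk) + 2 * pi / (3 * qk)) = pi / (3 * qk)"
      using qk1 by (simp add: field_simps)
    then have "xp j' u' - xp j u > pi / (3 * qk)" using a b by linarith
    moreover have "pi / (3 * qk) = 2 * (pi / (6 * qk))" by simp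
    ultimately show ?thesis using \<delta>6 by linarith
  qed
  have sep: "\<bar>xp j u - xp j' u'\<bar> \<ge> 2 * \<delta>" if "(j, u) \<noteq> (j', u')" "u \<in> U" "u' \<in> U" for j j' u u'
  proof (cases "j = j'")
    case True
    then have "u \<noteq> u'" using that by simp
    then have "\<bar>real u - real u'\<bar> \<ge> 1" by linarith
    then have "2 * \<delta> * \<bar>real u - real u'\<bar> \<ge> 2 * \<delta> * 1" using \<delta> by (intro mult_left_mono) auto
    moreover have "\<bar>xp j u - xp j' u'\<bar> = 2 * \<delta> * \<bar>real u - real u'\<bar>"
      unfolding xp_def True using \<delta> by (simp add: abs_mult flip: right_diff_distrib)
    ultimately show ?thesis by simp
  next
    case False
    then show ?thesis
    proof (cases "j < j'")
      case True then show ?thesis using sep_lt[OF True that(2,3)] by linarith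
    next
      case False
      then have "j' < j" using \<open>j \<noteq> j'\<close> by simp
      then show ?thesis using sep_lt[OF _ that(3,2), of j' j] by linarith
    qed
  qed
  have injxp: "inj_on (\<lambda>(j, u). xp j u) (J \<times> U)"
  proof (rule inj_onI)
    fix p p' assume p: "p \<in> J \<times> U" and p': "p' \<in> J \<times> U" and e: "(\<lambda>(j, u). xp j u) p = (\<lambda>(j, u). xp j u) p'"
    obtain j u j' u' where pp: "p = (j, u)" "p' = (j', u')" by (cases p, cases p') auto
    show "p = p'"
    proof (rule ccontr)
      assume "p \<noteq> p'"
      then have "\<bar>xp j u - xp j' u'\<bar> \<ge> 2 * \<delta>" using sep p p' unfolding pp by auto
      then show False using e \<delta> unfolding pp by simp
    qed
  qed
  have injfl: "inj_on (\<lambda>x. \<lfloor>x / \<delta>\<rfloor>) X"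
  proof (rule inj_onI)
    fix x x' assume x: "x \<in> X" and x': "x' \<in> X" and e: "\<lfloor>x / \<delta>\<rfloor> = \<lfloor>x' / \<delta>\<rfloor>"
    obtain j u where ju: "j \<in> J" "u \<in> U" "x = xp j u" using x unfolding X_def by auto
    obtain j' u' where ju': "j' \<in> J" "u' \<in> U" "x' = xp j' u'" using x' unfolding X_def by auto
    have "\<bar>x / \<delta> - x' / \<delta>\<bar> < 1" using e by linarith
    then have "\<bar>x - x'\<bar> < \<delta>" using \<delta> by (simp add: diff_divide_distrib[symmetric] abs_divide field_simps)
    then have "(j, u) = (j', u')" using sep[OF _ ju(2) ju'(2)] ju ju' \<delta> by (metis linorder_not_le mult_le_cancel_right1 nless_le one_le_numeral order_less_le_trans abs_ge_zero)
    then show "x = x'" using ju ju' by simp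
  qed
  have finJ: "finite J" unfolding J_def by simp
  have finU: "finite U" unfolding U_def by simp
  have cardX: "card X = card J * card U" unfolding X_def using card_image[OF injxp] finJ finU by (simp add: card_cartesian_product)
  have cJ: "real (card J) \<ge> \<eta> * qk / pi"
  proof -
    have "real (card J) = real (nat (jhi + 1 - jlo))" unfolding J_def by simp
    also have "\<dots> \<ge> of_int (jhi + 1 - jlo)" by simp
    finally have a: "real (card J) \<ge> of_int jhi + 1 - of_int jlo" by simp
    have b: "of_int jhi \<ge> (pi / real q + \<eta>) * qk / pi - 2" unfolding jhi_def by linarith
    have c': "of_int jlo \<le> (pi / real q - \<eta>) * qk / pi + 1" unfolding jlo_def by linarith
    have d: "(pi / real q + \<eta>) * qk / pi - 2 + 1 - ((pi / real q - \<eta>) * qk / pi + 1) = 2 * (\<eta> * qk / pi) - 2"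
      by (simp add: field_simps)
    have e: "\<eta> * qk / pi \<ge> 2" using qk \<eta> unfolding qk_def by (simp add: field_simps)
    show ?thesis using a b c' d e by linarith
  qed
  have cU: "real (card U) \<ge> pi / (6 * qk * \<delta>)"
  proof -
    have "real (card U) = real NU" unfolding U_def by simp
    also have "real NU \<ge> pi / (3 * qk * \<delta>) - 1" unfolding NU_def
    proof -
      have "pi / (3 * qk * \<delta>) \<ge> 0" using \<delta> qk1 by simp
      then show "real (nat \<lfloor>pi / (3 * qk * \<delta>)\<rfloor>) \<ge> pi / (3 * qk * \<delta>) - 1" by linarith
    qed
    finally have a: "real (card U) \<ge> pi / (3 * qk * \<delta>) - 1" .
    have "pi / (6 * qk * \<delta>) \<ge> 1" using \<delta>6 \<delta> qk1 by (simp add: field_simps)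
    moreover have "pi / (3 * qk * \<delta>) = 2 * (pi / (6 * qk * \<delta>))" by (simp add: field_simps)
    ultimately show ?thesis using a by linarith
  qed
  have cardXb: "real (card X) \<ge> \<eta> / (6 * \<delta>)"
  proof -
    have "real (card X) = real (card J) * real (card U)" unfolding cardX by simp
    also have "\<dots> \<ge> (\<eta> * qk / pi) * (pi / (6 * qk * \<delta>))"
      using cJ cU \<eta> qk1 \<delta> by (intro mult_mono) auto
    finally show ?thesis using qk1 \<delta> by (simp add: field_simps)
  qed
  define Wk where "Wk = W / lam ^ k"
  define Gs where "Gs = Wk + 2 * \<delta>"
  define NB where "NB = nat \<lfloor>(T - Wk) / Gs\<rfloor> + 1"
  define B where "B = {..<NB}"
  define lo where "lo \<beta> = real \<beta> * Gs" for \<beta> :: nat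
  define hi where "hi \<beta> = real \<beta> * Gs + Wk" for \<beta> :: nat
  have Wk0: "Wk > 0" unfolding Wk_def using W lam_pos by simp
  have Gs0: "Gs > 0" unfolding Gs_def using Wk0 \<delta> by simp
  have TW: "T - Wk \<ge> T / 2" using Wk unfolding Wk_def by simp
  have blk: "0 \<le> lo \<beta> \<and> hi \<beta> \<le> T" if "\<beta> \<in> B" for \<beta>
  proof -
    have f0: "0 \<le> \<lfloor>(T - Wk) / Gs\<rfloor>" using TW T Gs0 by simp
    have "\<beta> \<le> nat \<lfloor>(T - Wk) / Gs\<rfloor>" using that unfolding B_def NB_def by simp
    then have "int \<beta> \<le> \<lfloor>(T - Wk) / Gs\<rfloor>" using f0 by linarith
    then have "real \<beta> \<le> of_int \<lfloor>(T - Wk) / Gs\<rfloor>" by (metis of_int_le_iff of_int_of_nat_eq)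
    also have "\<dots> \<le> (T - Wk) / Gs" by simp
    finally have "real \<beta> * Gs \<le> T - Wk" using Gs0 by (simp add: field_simps)
    then show ?thesis unfolding lo_def hi_def using Gs0 by simp
  qed
  have sepB: "\<bar>t - t'\<bar> > \<delta>" if "\<beta> \<in> B" "\<beta>' \<in> B" "\<beta> \<noteq> \<beta>'" "t \<in> {lo \<beta>..hi \<beta>}" "t' \<in> {lo \<beta>'..hi \<beta>'}" for \<beta> \<beta>' t t'
  proof -
    have gen: "t2 - t1 \<ge> 2 * \<delta>" if "b1 < b2" "t1 \<in> {lo b1..hi b1}" "t2 \<in> {lo b2..hi b2}" for b1 b2 t1 t2
    proof -
      have "real b1 + 1 \<le> real b2" using that(1) by simp
      then have "(real b1 + 1) * Gs \<le> real b2 * Gs" using Gs0 by (intro mult_right_mono) auto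
      then show ?thesis using that(2,3) unfolding lo_def hi_def Gs_def by (auto simp: algebra_simps)
    qed
    show ?thesis
    proof (cases "\<beta> < \<beta>'")
      case True then show ?thesis using gen[OF True that(4,5)] \<delta> by linarith
    next
      case False then have "\<beta>' < \<beta>" using that(3) by simp
      then show ?thesis using gen[OF _ that(5,4)] \<delta> by linarith
    qed
  qed
  have cB: "real (card B) \<ge> T / (2 * Gs)"
  proof -
    have "real (card B) = real NB" unfolding B_def by simp
    also have "real NB = of_int \<lfloor>(T - Wk) / Gs\<rfloor> + 1" unfolding NB_def
      using T TW Gs0 by simp
    finally have "real (card B) \<ge> (T - Wk) / Gs" by linarith
    moreover have "(T - Wk) / Gs \<ge> (T / 2) / Gs" using TW Gs0 by (intro divide_right_mono) auto
    moreover have "(T / 2) / Gs = T / (2 * Gs)" by simp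
    ultimately show ?thesis by linarith
  qed
  have pts: "\<forall>xb\<in>X \<times> B. \<exists>p. fst p \<in> {lo (snd xb)..hi (snd xb)} \<and> snd p \<in> {lo (snd xb)..hi (snd xb)}
      \<and> \<bar>Prob q s (fst xb) (fst p) - Prob q s (fst xb) (snd p)\<bar> \<ge> c * r ^ k"
  proof
    fix xb assume "xb \<in> X \<times> B"
    then obtain x \<beta> where xb: "xb = (x, \<beta>)" "x \<in> X" "\<beta> \<in> B" by auto
    obtain j u where ju: "j \<in> J" "u \<in> U" "x = xp j u" using xb(2) unfolding X_def by auto
    obtain t1 t2 where tt: "t1 \<in> {lo \<beta>..lo \<beta> + W / lam ^ k}" "t2 \<in> {lo \<beta>..lo \<beta> + W / lam ^ k}"
      "\<bar>Prob q s x t1 - Prob q s x t2\<bar> \<ge> c * r ^ k"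
      using oscL[of x "lo \<beta>"] xnear[OF ju(1,2)] sinx[OF ju(2)] ju(3) by blast
    show "\<exists>p. fst p \<in> {lo (snd xb)..hi (snd xb)} \<and> snd p \<in> {lo (snd xb)..hi (snd xb)}
      \<and> \<bar>Prob q s (fst xb) (fst p) - Prob q s (fst xb) (snd p)\<bar> \<ge> c * r ^ k"
      using tt unfolding xb hi_def lo_def Wk_def by (intro exI[of _ "(t1, t2)"]) auto
  qed
  then obtain P where P: "\<forall>xb\<in>X \<times> B. fst (P xb) \<in> {lo (snd xb)..hi (snd xb)} \<and> snd (P xb) \<in> {lo (snd xb)..hi (snd xb)}
      \<and> \<bar>Prob q s (fst xb) (fst (P xb)) - Prob q s (fst xb) (snd (P xb))\<bar> \<ge> c * r ^ k"
    by (metis (no_types, lifting) bchoice)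
  have finX: "finite X" unfolding X_def using finJ finU by simp
  have finB: "finite B" unfolding B_def by simp
  have BL: "real (card X) * real (card B) * (c * r ^ k / \<delta> - 1) \<le> real (box_count G \<delta>)"
    unfolding G_def
  proof (rule box_lower[where ?t1.0 = "\<lambda>x \<beta>. fst (P (x, \<beta>))" and ?t2.0 = "\<lambda>x \<beta>. snd (P (x, \<beta>))" and lo = lo and hi = hi])
    show "finite (cubeset {(x, t, Prob q s x t) |x t. x \<in> {0..pi} \<and> t \<in> {0..T}} \<delta>)" using fin unfolding G_def .
  qed (use \<delta> finX finB Xsub blk injfl sepB Prob_cont P in auto)
  have o1: "c * r ^ k / \<delta> - 1 \<ge> c * r ^ k / (2 * \<delta>)" using big \<delta> by (simp add: field_simps)
  have "(\<eta> / (6 * \<delta>)) * (T / (2 * Gs)) * (c * r ^ k / (2 * \<delta>)) \<le> real (card X) * real (card B) * (c * r ^ k / \<delta> - 1)"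
    using cardXb cB o1 \<eta> \<delta> T Gs0 c r_pos by (intro mult_mono) auto
  then show ?thesis using BL unfolding Gs_def Wk_def by linarith
qed

lemma lower_count:
  assumes T: "T > 0"
  defines "G \<equiv> {(x, t, Prob q s x t) | x t. x \<in> {0..pi} \<and> t \<in> {0..T}}"
  shows "\<exists>c'>0. \<exists>\<delta>0>0. \<forall>\<delta>. 0 < \<delta> \<longrightarrow> \<delta> < \<delta>0 \<longrightarrow> real (box_count G \<delta>) \<ge> c' * \<delta> powr (-(2 + s/2))"
proof -
  obtain \<eta> c W K0 where \<eta>: "0 < \<eta>" "\<eta> \<le> pi / (2 * real q)" and c: "0 < c" and W: "0 < W"
    and oscL: "\<And>k x. k \<ge> K0 \<Longrightarrow> \<bar>x - pi / real q\<bar> \<le> \<eta> \<Longrightarrow> \<bar>sin (real q ^ k * x)\<bar> \<ge> 1 / 2 \<Longrightarrow>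
      (\<forall>t0. \<exists>t1 t2. t1 \<in> {t0..t0 + W / lam ^ k} \<and> t2 \<in> {t0..t0 + W / lam ^ k} \<and>
          \<bar>Prob q s x t1 - Prob q s x t2\<bar> \<ge> c * r ^ k)"
    using osc_lower by blast
  obtain C1 \<delta>1 where \<delta>1: "\<delta>1 > 0" and fin: "\<And>\<delta>. 0 < \<delta> \<Longrightarrow> \<delta> < \<delta>1 \<Longrightarrow> finite (cubeset G \<delta>)"
    using upper_count[OF T] unfolding G_def by blast
  have q1: "real q > 1" using qpos by simp
  have lam1: "lam > 1" using lam_ge4 by simp
  obtain N1 where N1: "\<forall>n\<ge>N1. 2 * pi / \<eta> < real q ^ n" using ev_pow_large[OF q1] by blast
  obtain N2 where N2: "\<forall>n\<ge>N2. 2 * W / T < lam ^ n" using ev_pow_large[OF lam1] by blast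
  obtain N3 where N3: "\<forall>n\<ge>N3. 1 / (2 * c) < (r * lam) ^ n" using ev_pow_large[OF rlam_gt1] by blast
  define Kb where "Kb = max K0 (max N1 (max N2 N3))"
  define \<delta>0 where "\<delta>0 = min \<delta>1 ((1/4) / lam ^ Suc Kb)"
  define c' where "c' = \<eta> * T * c * (1 / (4 * lam)) powr (s/2) / (24 * (W + 1/2))"
  have \<delta>00: "\<delta>0 > 0" unfolding \<delta>0_def using \<delta>1 lam_pos by simp
  have c'0: "c' > 0" unfolding c'_def using \<eta> T c W lam_pos by simp
  have "real (box_count G \<delta>) \<ge> c' * \<delta> powr (-(2 + s/2))" if \<delta>: "0 < \<delta>" "\<delta> < \<delta>0" for \<delta>
  proof -
    have lKb: "lam ^ Suc Kb \<ge> 1" using lam1 by (intro one_le_power) simp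
    have \<delta>a: "\<delta> < (1/4) / lam ^ Suc Kb" using \<delta> unfolding \<delta>0_def by simp
    then have y1: "(1/4) / \<delta> > lam ^ Suc Kb" using \<delta> lam_pos by (simp add: field_simps)
    then have "(1/4) / \<delta> \<ge> 1" using lKb by linarith
    then obtain k where k1: "lam ^ k \<le> (1/4) / \<delta>" and k2: "(1/4) / \<delta> < lam ^ Suc k"
      using pow_bracket[OF lam1] by blast
    have "lam ^ Suc Kb < lam ^ Suc k" using y1 k2 by linarith
    then have "Suc Kb < Suc k" using power_less_imp_less_exp[OF lam1] by blast
    then have kK: "k \<ge> Kb" by simp
    have lk: "lam ^ k > 0" using lam_pos by simp
    have \<delta>k: "\<delta> \<le> (1/4) / lam ^ k" using k1 \<delta> lk lam_pos by (simp add: field_simps)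
    have qk: "real q ^ k \<ge> 2 * pi / \<eta>" using N1 kK unfolding Kb_def by (auto intro: less_imp_le)
    have Wk: "W / lam ^ k \<le> T / 2"
    proof -
      have "2 * W / T < lam ^ k" using N2 kK unfolding Kb_def by auto
      then show ?thesis using T lk lam_pos by (simp add: field_simps)
    qed
    have big: "c * r ^ k / \<delta> \<ge> 2"
    proof -
      have "1 / (2 * c) < (r * lam) ^ k" using N3 kK unfolding Kb_def by auto
      then have a: "2 * c * (r * lam) ^ k > 1" using c by (simp add: field_simps)
      have "1 / \<delta> \<ge> 4 * lam ^ k" using \<delta>k \<delta> lk lam_pos by (simp add: field_simps)
      then have "c * r ^ k * (1 / \<delta>) \<ge> c * r ^ k * (4 * lam ^ k)" using c r_pos by (intro mult_left_mono) auto
      moreover have "c * r ^ k * (4 * lam ^ k) = 2 * (2 * c * (r * lam) ^ k)" by (simp add: power_mult_distrib)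
      ultimately show ?thesis using a by simp
    qed
    have oscK: "\<And>x t0. \<bar>x - pi / real q\<bar> \<le> \<eta> \<Longrightarrow> \<bar>sin (real q ^ k * x)\<bar> \<ge> 1 / 2 \<Longrightarrow>
        \<exists>t1 t2. t1 \<in> {t0..t0 + W / lam ^ k} \<and> t2 \<in> {t0..t0 + W / lam ^ k} \<and> \<bar>Prob q s x t1 - Prob q s x t2\<bar> \<ge> c * r ^ k"
      using oscL kK unfolding Kb_def by auto
    have finG: "finite (cubeset G \<delta>)" using fin \<delta> unfolding \<delta>0_def by simp
    have LB: "real (box_count G \<delta>) \<ge> (\<eta> / (6 * \<delta>)) * (T / (2 * (W / lam ^ k + 2 * \<delta>))) * (c * r ^ k / (2 * \<delta>))"
      unfolding G_def by (rule lower_fixed_k[OF T \<eta> c W oscK \<delta>(1) \<delta>k qk Wk big finG[unfolded G_def]])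
    have g1: "T / (2 * (W / lam ^ k + 2 * \<delta>)) \<ge> T * lam ^ k / (2 * (W + 1/2))"
    proof -
      have "W / lam ^ k + 2 * \<delta> \<le> (W + 1/2) / lam ^ k" using \<delta>k lk lam_pos by (simp add: field_simps)
      moreover have "W / lam ^ k + 2 * \<delta> > 0" using W lk \<delta> by (intro add_pos_pos divide_pos_pos) auto
      ultimately have "T / (2 * ((W + 1/2) / lam ^ k)) \<le> T / (2 * (W / lam ^ k + 2 * \<delta>))"
      proof -
        assume a: "W / lam ^ k + 2 * \<delta> \<le> (W + 1/2) / lam ^ k" and b: "W / lam ^ k + 2 * \<delta> > 0"
        have "0 < (2 * ((W + 1/2) / lam ^ k)) * (2 * (W / lam ^ k + 2 * \<delta>))" using a b by (intro mult_pos_pos) auto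
        moreover have "2 * (W / lam ^ k + 2 * \<delta>) \<le> 2 * ((W + 1/2) / lam ^ k)" using mult_left_mono[OF a, of 2] by simp
        ultimately show ?thesis using T by (intro divide_left_mono) auto
      qed
      moreover have "T / (2 * ((W + 1/2) / lam ^ k)) = T * lam ^ k / (2 * (W + 1/2))" using lk lam_pos by (simp add: field_simps)
      ultimately show ?thesis by simp
    qed
    have g2: "(r * lam) ^ k \<ge> (1 / (4 * lam)) powr (s/2) * \<delta> powr (-(s/2))"
    proof -
      have "(1/4) / (lam * \<delta>) \<le> lam ^ k" using k2 \<delta> lam_pos by (simp add: field_simps)
      then have "((1/4) / (lam * \<delta>)) powr (s/2) \<le> (lam ^ k) powr (s/2)" using s0 \<delta> lam_pos by (intro powr_mono2) auto
      moreover have e: "(1/4) / (lam * \<delta>) = (1 / (4 * lam)) * (1 / \<delta>)" by (simp add: field_simps)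
      moreover have "((1/4) / (lam * \<delta>)) powr (s/2) = (1 / (4 * lam)) powr (s/2) * (1 / \<delta>) powr (s/2)"
        by (simp only: e powr_mult)
      moreover have "(1 / \<delta>) powr (s/2) = \<delta> powr (-(s/2))" by (simp only: powr_divide powr_one_eq_one powr_minus_divide)
      ultimately show ?thesis unfolding rlam_pow by simp
    qed
    have "(\<eta> / (6 * \<delta>)) * (T / (2 * (W / lam ^ k + 2 * \<delta>))) * (c * r ^ k / (2 * \<delta>))
        \<ge> (\<eta> / (6 * \<delta>)) * (T * lam ^ k / (2 * (W + 1/2))) * (c * r ^ k / (2 * \<delta>))"
      using g1 \<eta> \<delta> c r_pos by (intro mult_right_mono mult_left_mono) auto
    also have "(\<eta> / (6 * \<delta>)) * (T * lam ^ k / (2 * (W + 1/2))) * (c * r ^ k / (2 * \<delta>))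
        = (\<eta> * T * c / (24 * (W + 1/2))) * (r * lam) ^ k * ((1 / \<delta>) * (1 / \<delta>))"
    proof -
      have gen: "\<And>V L R. V \<noteq> 0 \<Longrightarrow> (\<eta> / (6 * \<delta>)) * (T * L / (2 * V)) * (c * R / (2 * \<delta>))
          = (\<eta> * T * c / (24 * V)) * (R * L) * ((1 / \<delta>) * (1 / \<delta>))"
        using \<delta> by (simp add: field_simps)
      have "W + 1/2 \<noteq> 0" using W by simp
      from gen[OF this, of "lam ^ k" "r ^ k"] show ?thesis by (simp add: power_mult_distrib)
    qed
    also have "\<dots> \<ge> (\<eta> * T * c / (24 * (W + 1/2))) * ((1 / (4 * lam)) powr (s/2) * \<delta> powr (-(s/2))) * ((1 / \<delta>) * (1 / \<delta>))"
      using g2 \<eta> T c W \<delta> by (intro mult_right_mono mult_left_mono) auto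
    also have "(\<eta> * T * c / (24 * (W + 1/2))) * ((1 / (4 * lam)) powr (s/2) * \<delta> powr (-(s/2))) * ((1 / \<delta>) * (1 / \<delta>))
        = c' * \<delta> powr (-(2 + s/2))" unfolding c'_def powr_split[OF \<delta>(1)] by (simp add: field_simps)
    finally show ?thesis using LB by linarith
  qed
  then show ?thesis using c'0 \<delta>00 by blast
qed

end

theorem theorem1:
  fixes q :: nat and s T :: real
  assumes "q \<ge> 2" and "0 < s" and "s < 2" and "T > 0"
  shows "has_box_dim {(x, t, Prob q s x t) | x t. x \<in> {0..pi} \<and> t \<in> {0..T}} (2 + s / 2)"
proof -
  interpret wf q s using assms by unfold_locales
  obtain C \<delta>1 where C: "C > 0" and \<delta>1: "\<delta>1 > 0" and up: "\<And>\<delta>. 0 < \<delta> \<Longrightarrow> \<delta> < \<delta>1 \<Longrightarrow>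
      real (box_count {(x, t, Prob q s x t) | x t. x \<in> {0..pi} \<and> t \<in> {0..T}} \<delta>) \<le> C * \<delta> powr (-(2 + s/2))"
    using upper_count[OF assms(4)] by blast
  obtain c \<delta>2 where c: "c > 0" and \<delta>2: "\<delta>2 > 0" and lo: "\<And>\<delta>. 0 < \<delta> \<Longrightarrow> \<delta> < \<delta>2 \<Longrightarrow>
      real (box_count {(x, t, Prob q s x t) | x t. x \<in> {0..pi} \<and> t \<in> {0..T}} \<delta>) \<ge> c * \<delta> powr (-(2 + s/2))"
    using lower_count[OF assms(4)] by blast
  show ?thesis unfolding has_box_dim_def
  proof (rule dim_from_bounds[OF c C, of "min \<delta>1 \<delta>2"])
    show "0 < min \<delta>1 \<delta>2" using \<delta>1 \<delta>2 by simp
  next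
    fix \<delta> :: real assume "0 < \<delta>" "\<delta> < min \<delta>1 \<delta>2"
    then show "c * \<delta> powr - (2 + s / 2) \<le> real (box_count {(x, t, Prob q s x t) | x t. x \<in> {0..pi} \<and> t \<in> {0..T}} \<delta>) \<and>
          real (box_count {(x, t, Prob q s x t) | x t. x \<in> {0..pi} \<and> t \<in> {0..T}} \<delta>) \<le> C * \<delta> powr - (2 + s / 2)"
      using up lo by auto
  qed
qed

end
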